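(* Assume the missing-at-random setting below. Then: (i) for every $1\le k\le n_{\mathcal S1}$ and $c\in\mathbb R$, $\mathbb P(p_{\texttt t,k,c,\mathcal S}\le\alpha\text{ and }H^{\texttt{to}}_{k,c}\text{ holds})\le\alpha$ for all $\alpha\in(0,1)$, where $H^{\texttt{to}}_{k,c}:\sum_{i\in\mathcal S}Z_i\mathbf 1\{\tau_i>c\}\le n_{\mathcal S1}-k$ (equivalently $\tau_{\texttt{to}(k)}\le c$); (ii) for every $1\le k\le n_{\mathcal S1}$, $\mathcal I^\alpha_{\texttt{to},k}:=\{c\in\mathbb R:p_{\texttt t,k,c,\mathcal S}>\alpha\}$ satisfies $\mathbb P(\tau_{\texttt{to}(k)}\in\mathcal I^\alpha_{\texttt{to},k})\ge1-\alpha$ and is a one-sided interval of the form $[\hat\tau_{\texttt{to}(k)},\infty)$ or $(\hat\tau_{\texttt{to}(k)},\infty)$ with $\hat\tau_{\texttt{to}(k)}=\inf\mathcal I^\alpha_{\texttt{to},k}$; (iii) $\mathbb P(\tau_{\texttt{to}(k)}\in\mathcal I^\alpha_{\texttt{to},k}\text{ for all }1\le k\le n_{\mathcal S1})\ge1-\alpha$.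
   Context: There are $n$ units with fixed potential outcomes $Y_i^\star(0),Y_i^\star(1)\in\mathbb R$; $\tau_i=Y_i^\star(1)-Y_i^\star(0)$. Missing at random: the pairs $(M_i(1),M_i(0))\in\{0,1\}^2$ are random, i.i.d. over $i$, with $\mathbb P((M_i(1),M_i(0))=(m,m'))=p_{mm'}$ for constants $p_{11},p_{10},p_{01},p_{00}$ summing to 1 not depending on the potential outcomes. $\boldsymbol Z\in\{0,1\}^n$ is uniform over vectors with exactly $n_1$ ones ($n_1,n_0\ge1$ fixed, $n_1+n_0=n$), independent of the potential outcomes and potential missingness. $M_i=Z_iM_i(1)+(1-Z_i)M_i(0)$; the realized outcome $Z_iY_i^\star(1)+(1-Z_i)Y_i^\star(0)$ is observed, denoted $Y_i$, iff $M_i=1$. $\mathcal S=\{i:M_i=1\}$, $n_{\mathcal S1}=\sum_{i\in\mathcal S}Z_i$, $n_{\mathcal S0}=|\mathcal S|-n_{\mathcal S1}$; $\tau_{\texttt{to}(1)}\le\dots\le\tau_{\texttt{to}(n_{\mathcal S1})}$ are the sorted $\tau_i$ over $i\in\mathcal S$ with $Z_i=1$. Statistics: $\overline{\mathbb R}=\mathbb R\cup\{\pm\infty\}$; $\psi_{i,j}(y,y')=\mathbf 1\{y>y'\}+\mathbf 1\{y=y'\}\mathbf 1\{i\ge j\}$; $\mathrm{rank}_i(\boldsymbol y)=\sum_j\psi_{i,j}(y_i,y_j)$; $\phi$ nondecreasing real function on nonnegative integers; $t_{\mathrm R,\phi}(\boldsymbol z,\boldsymbol y)$ is either $\sum_iz_i\phi(\mathrm{rank}_i(\boldsymbol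 y))$ or $\sum_iz_i\phi(\sum_j(1-z_j)\psi_{i,j}(y_i,y_j))$ (either choice). $t_{\mathrm R,\phi,\mathcal S}(\boldsymbol z,\boldsymbol y)=t_{\mathrm R,\phi}(\boldsymbol z_{\mathcal S},\boldsymbol y_{\mathcal S})$ (subvectors indexed by $\mathcal S$, original order); $G_{\mathrm R,\phi,\mathcal S}(c)=\mathbb P(t_{\mathrm R,\phi,\mathcal S}(\boldsymbol A,\boldsymbol y_0)\ge c)$ with $\boldsymbol A_{\mathcal S}$ uniform over assignments of $\mathcal S$ with exactly $n_{\mathcal S1}$ treated ($\mathcal S,n_{\mathcal S1}$ held fixed) and $\boldsymbol y_0\in\mathbb R^n$ fixed. p-value: write $\{i:Z_i=M_i=1\}=\{j_1,\dots,j_{n_{\mathcal S1}}\}$ with $\psi_{j_{l+1},j_l}(Y_{j_{l+1}},Y_{j_l})=1$; $\mathcal J_L=\{j_{n_{\mathcal S1}-L+1},\dots,j_{n_{\mathcal S1}}\}$ for $L\ge1$, $\mathcal J_0=\emptyset$. Let $\boldsymbol v\in\overline{\mathbb R}^n$ with $v_i=-\infty$ for $i\in\mathcal J_{n_{\mathcal S1}-k}$ and $v_i=Y_i-cZ_i$ for other $i\in\mathcal S$. Then $p_{\texttt t,k,c,\mathcal S}=G_{\mathrm R,\phi,\mathcal S}(t_{\mathrm R,\phi,\mathcal S}(\boldsymbol Z,\boldsymbol v))$. *)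

theory Defs
  imports Complex_Main "HOL-Library.Extended_Real"
begin

(* Units are indexed by 0..<n.  A treatment assignment Z is represented by the set T of
   treated units; potential missingness (M_i(1), M_i(0)) by the sets M1 = {i. M_i(1)=1}
   and M0 = {i. M_i(0)=1}. *)

definition psi :: "nat \<Rightarrow> nat \<Rightarrow> ereal \<Rightarrow> ereal \<Rightarrow> nat" where
  "psi i j y y' = (if y > y' \<or> (y = y' \<and> j \<le> i) then 1 else 0)"

(* t_{R,phi,S}(z,y): statistic on the subvectors indexed by S (original order kept, so the
   tie-breaking by position coincides with tie-breaking by original index); A = treated
   units (z_i = 1).  The flag b selects between the two allowed choices of t_{R,phi}. *)
definition rank_stat :: "bool \<Rightarrow> (nat \<Rightarrow> real) \<Rightarrow> nat set \<Rightarrow> nat set \<Rightarrow> (nat \<Rightarrow> ereal) \<Rightarrow> real" where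
  "rank_stat b \<phi> S A y =
     (\<Sum>i\<in>S \<inter> A. \<phi> (if b then (\<Sum>j\<in>S. psi i j (y i) (y j))
                         else (\<Sum>j\<in>S - A. psi i j (y i) (y j))))"

definition G_fun :: "bool \<Rightarrow> (nat \<Rightarrow> real) \<Rightarrow> nat set \<Rightarrow> nat \<Rightarrow> (nat \<Rightarrow> real) \<Rightarrow> real \<Rightarrow> real" where
  "G_fun b \<phi> S m y0 c =
     real (card {A. A \<subseteq> S \<and> card A = m \<and> c \<le> rank_stat b \<phi> S A (\<lambda>i. ereal (y0 i))})
     / real (card {A. A \<subseteq> S \<and> card A = m})"

definition obs :: "nat \<Rightarrow> nat set \<Rightarrow> nat set \<Rightarrow> nat set \<Rightarrow> nat set" where
  "obs n T M1 M0 = {i \<in> {..<n}. (if i \<in> T then i \<in> M1 else i \<in> M0)}"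

definition yobs :: "(nat \<Rightarrow> real) \<Rightarrow> (nat \<Rightarrow> real) \<Rightarrow> nat set \<Rightarrow> nat \<Rightarrow> real" where
  "yobs Y1 Y0 T i = (if i \<in> T then Y1 i else Y0 i)"

definition nS1 :: "nat \<Rightarrow> nat set \<Rightarrow> nat set \<Rightarrow> nat set \<Rightarrow> nat" where
  "nS1 n T M1 M0 = card (obs n T M1 M0 \<inter> T)"

(* J_{n_{S1}-k}: the treated observed units j_l with l > k, where j_l is the unit whose
   position in the psi-ordering of treated observed units is l, i.e.
   l = #{j treated observed : psi_{j_l,j}(Y_{j_l},Y_j) = 1}. *)
definition Jset :: "nat \<Rightarrow> (nat \<Rightarrow> real) \<Rightarrow> (nat \<Rightarrow> real) \<Rightarrow> nat set \<Rightarrow> nat set \<Rightarrow> nat set \<Rightarrow> nat \<Rightarrow> nat set" where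
  "Jset n Y1 Y0 T M1 M0 k =
     {i \<in> obs n T M1 M0 \<inter> T.
        k < card {j \<in> obs n T M1 M0 \<inter> T.
                    psi i j (ereal (yobs Y1 Y0 T i)) (ereal (yobs Y1 Y0 T j)) = 1}}"

definition vvec :: "nat \<Rightarrow> (nat \<Rightarrow> real) \<Rightarrow> (nat \<Rightarrow> real) \<Rightarrow> nat set \<Rightarrow> nat set \<Rightarrow> nat set \<Rightarrow> nat \<Rightarrow> real \<Rightarrow> nat \<Rightarrow> ereal" where
  "vvec n Y1 Y0 T M1 M0 k c i =
     (if i \<in> Jset n Y1 Y0 T M1 M0 k then -\<infinity>
      else ereal (yobs Y1 Y0 T i - c * (if i \<in> T then 1 else 0)))"

definition pval :: "bool \<Rightarrow> (nat \<Rightarrow> real) \<Rightarrow> (nat \<Rightarrow> real) \<Rightarrow> nat \<Rightarrow> (nat \<Rightarrow> real) \<Rightarrow> (nat \<Rightarrow> real)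
    \<Rightarrow> nat set \<Rightarrow> nat set \<Rightarrow> nat set \<Rightarrow> nat \<Rightarrow> real \<Rightarrow> real" where
  "pval b \<phi> y0 n Y1 Y0 T M1 M0 k c =
     G_fun b \<phi> (obs n T M1 M0) (nS1 n T M1 M0) y0
       (rank_stat b \<phi> (obs n T M1 M0) (T \<inter> obs n T M1 M0) (vvec n Y1 Y0 T M1 M0 k c))"

(* tau_{to(k)}: k-th smallest (1-based) of tau_i over treated observed units *)
definition tau_to :: "nat \<Rightarrow> (nat \<Rightarrow> real) \<Rightarrow> (nat \<Rightarrow> real) \<Rightarrow> nat set \<Rightarrow> nat set \<Rightarrow> nat set \<Rightarrow> nat \<Rightarrow> real" where
  "tau_to n Y1 Y0 T M1 M0 k =
     sort (map (\<lambda>i. Y1 i - Y0 i) (sorted_list_of_set (obs n T M1 M0 \<inter> T))) ! (k - 1)"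

definition Hto :: "nat \<Rightarrow> (nat \<Rightarrow> real) \<Rightarrow> (nat \<Rightarrow> real) \<Rightarrow> nat set \<Rightarrow> nat set \<Rightarrow> nat set \<Rightarrow> nat \<Rightarrow> real \<Rightarrow> bool" where
  "Hto n Y1 Y0 T M1 M0 k c \<longleftrightarrow>
     card {i \<in> obs n T M1 M0 \<inter> T. Y1 i - Y0 i > c} \<le> nS1 n T M1 M0 - k"

definition CI :: "bool \<Rightarrow> (nat \<Rightarrow> real) \<Rightarrow> (nat \<Rightarrow> real) \<Rightarrow> nat \<Rightarrow> (nat \<Rightarrow> real) \<Rightarrow> (nat \<Rightarrow> real)
    \<Rightarrow> real \<Rightarrow> nat set \<Rightarrow> nat set \<Rightarrow> nat set \<Rightarrow> nat \<Rightarrow> real set" where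
  "CI b \<phi> y0 n Y1 Y0 \<alpha> T M1 M0 k = {c. pval b \<phi> y0 n Y1 Y0 T M1 M0 k c > \<alpha>}"

(* Probability of an event E(T, M1, M0): T uniform over n1-subsets of {..<n}, independent
   of the pairs (M_i(1), M_i(0)), which are i.i.d. with P((M_i(1),M_i(0)) = (m,m')) = p m m'. *)
definition prob_ev :: "nat \<Rightarrow> nat \<Rightarrow> (bool \<Rightarrow> bool \<Rightarrow> real) \<Rightarrow> (nat set \<Rightarrow> nat set \<Rightarrow> nat set \<Rightarrow> bool) \<Rightarrow> real" where
  "prob_ev n n1 p E =
     (\<Sum>T\<in>{T. T \<subseteq> {..<n} \<and> card T = n1}. \<Sum>M1\<in>Pow {..<n}. \<Sum>M0\<in>Pow {..<n}.
        if E T M1 M0 then (\<Prod>i<n. p (i \<in> M1) (i \<in> M0)) / real (n choose n1) else 0)"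

end

theory Submission
  imports Defs "HOL-Library.Product_Lexorder"
begin

lemma rk_le_iff:
  fixes K :: "nat \<Rightarrow> 'k::linorder"
  assumes "finite A" "inj_on K A" "i \<in> A" "j \<in> A"
  shows "card {l\<in>A. K l \<le> K j} \<le> card {l\<in>A. K l \<le> K i} \<longleftrightarrow> K j \<le> K i"
proof
  assume h: "card {l\<in>A. K l \<le> K j} \<le> card {l\<in>A. K l \<le> K i}"
  show "K j \<le> K i"
  proof (rule ccontr)
    assume "\<not> K j \<le> K i"
    hence lt: "K i < K j" by simp
    have s1: "{l\<in>A. K l \<le> K i} \<subseteq> {l\<in>A. K l \<le> K j}" using lt by auto
    have s2: "j \<in> {l\<in>A. K l \<le> K j} - {l\<in>A. K l \<le> K i}" using lt assms(4) by auto
    have "{l\<in>A. K l \<le> K i} \<subset> {l\<in>A. K l \<le> K j}" using s1 s2 by blast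
    hence "card {l\<in>A. K l \<le> K i} < card {l\<in>A. K l \<le> K j}"
      by (rule psubset_card_mono[rotated]) (use assms(1) in auto)
    with h show False by simp
  qed
next
  assume "K j \<le> K i"
  thus "card {l\<in>A. K l \<le> K j} \<le> card {l\<in>A. K l \<le> K i}"
    by (intro card_mono) (use assms(1) in auto)
qed

lemma rk_bij:
  fixes K :: "nat \<Rightarrow> 'k::linorder"
  assumes "finite A" "inj_on K A"
  shows "bij_betw (\<lambda>i. card {j\<in>A. K j \<le> K i}) A {1..card A}"
proof -
  let ?r = "\<lambda>i. card {j\<in>A. K j \<le> K i}"
  have inj: "inj_on ?r A"
  proof (rule inj_onI)
    fix i j assume ij: "i \<in> A" "j \<in> A" and eq: "?r i = ?r j"
    have "K j \<le> K i" using rk_le_iff[OF assms ij] eq by simp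
    moreover have "K i \<le> K j" using rk_le_iff[OF assms ij(2) ij(1)] eq by simp
    ultimately have "K i = K j" by simp
    thus "i = j" using assms(2) \<open>i\<in>A\<close> \<open>j\<in>A\<close> by (meson inj_onD)
  qed
  have sub: "?r ` A \<subseteq> {1..card A}"
  proof
    fix x assume "x \<in> ?r ` A"
    then obtain i where i: "i \<in> A" "x = ?r i" by auto
    have ne: "i \<in> {j\<in>A. K j \<le> K i}" using i by auto
    have fin: "finite {j\<in>A. K j \<le> K i}" using assms(1) by auto
    have "{j\<in>A. K j \<le> K i} \<noteq> {}" using ne by blast
    hence "0 < x" unfolding i(2) using fin by (simp add: card_gt_0_iff)
    moreover have "x \<le> card A" unfolding i(2) by (rule card_mono[OF assms(1)]) auto
    ultimately show "x \<in> {1..card A}" by simp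
  qed
  have "card (?r ` A) = card {1..card A}" using card_image[OF inj] by simp
  hence "?r ` A = {1..card A}" using sub by (intro card_subset_eq) auto
  thus ?thesis using inj by (simp add: bij_betw_def)
qed

definition gst :: "bool \<Rightarrow> (nat \<Rightarrow> real) \<Rightarrow> nat set \<Rightarrow> nat set \<Rightarrow> (nat \<Rightarrow> 'k::linorder) \<Rightarrow> real" where
  "gst b \<phi> S A K = (\<Sum>i\<in>A. \<phi> (if b then card {j\<in>S. K j \<le> K i} else card {j\<in>S-A. K j \<le> K i}))"

lemma sum_ind_card: "finite S \<Longrightarrow> (\<Sum>j\<in>S. (if P j then 1 else 0::nat)) = card {j\<in>S. P j}"
  by (simp add: sum.If_cases Int_def conj_commute)

lemma psi_eq: "psi i j (y i) (y j) = (if (y j, j) \<le> (y i, i) then 1 else 0)"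
  by (auto simp: psi_def)

lemma rank_stat_gst:
  assumes "finite S"
  shows "rank_stat b \<phi> S A y = gst b \<phi> S (S \<inter> A) (\<lambda>i. (y i, i))"
proof -
  have e1: "(\<Sum>j\<in>S. psi i j (y i) (y j)) = card {j\<in>S. (y j, j) \<le> (y i, i)}" for i
    unfolding psi_eq by (rule sum_ind_card[OF assms])
  have e2: "(\<Sum>j\<in>S - A. psi i j (y i) (y j)) = card {j\<in>S - A. (y j, j) \<le> (y i, i)}" for i
    unfolding psi_eq by (rule sum_ind_card) (use assms in simp)
  have d: "S - (S \<inter> A) = S - A" by auto
  show ?thesis unfolding rank_stat_def gst_def by (simp only: e1 e2 d)
qed

lemma gst_mono:
  fixes K K' :: "nat \<Rightarrow> 'k::linorder"
  assumes fS: "finite S" and AS: "A \<subseteq> S" and mono: "mono \<phi>" and iK: "inj_on K A" and iK': "inj_on K' A"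
    and eqC: "\<forall>i\<in>S-A. K i = K' i"
    and dom: "\<And>x. card {i\<in>A. K' i \<le> x} \<le> card {i\<in>A. K i \<le> x}"
  shows "gst b \<phi> S A K \<le> gst b \<phi> S A K'"
proof -
  have fA: "finite A" using fS AS finite_subset by blast
  define tr where "tr L i = card {j\<in>A. L j \<le> L i}" for L :: "nat \<Rightarrow> 'k" and i
  have bK: "bij_betw (tr K) A {1..card A}" unfolding tr_def by (rule rk_bij[OF fA iK])
  have bK': "bij_betw (tr K') A {1..card A}" unfolding tr_def by (rule rk_bij[OF fA iK'])
  define \<sigma> where "\<sigma> = inv_into A (tr K) \<circ> tr K'"
  have bs: "bij_betw \<sigma> A A" unfolding \<sigma>_def
    using bK' bij_betw_inv_into[OF bK] by (rule bij_betw_trans)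
  have trs: "tr K (\<sigma> i) = tr K' i" if "i \<in> A" for i
  proof -
    have "tr K' i \<in> tr K' ` A" using that by simp
    hence "tr K' i \<in> tr K ` A" using bK bK' by (simp add: bij_betw_def)
    thus ?thesis unfolding \<sigma>_def by (simp add: f_inv_into_f)
  qed
  have sA: "\<sigma> i \<in> A" if "i \<in> A" for i using bs that by (meson bij_betwE)
  have Ks: "K (\<sigma> i) \<le> K' i" if i: "i \<in> A" for i
  proof (rule ccontr)
    assume "\<not> K (\<sigma> i) \<le> K' i"
    hence lt: "K' i < K (\<sigma> i)" by simp
    have "tr K' i \<le> card {j\<in>A. K j \<le> K' i}" unfolding tr_def using dom by blast
    also have "{j\<in>A. K j \<le> K' i} \<subseteq> {j\<in>A. K j \<le> K (\<sigma> i)} - {\<sigma> i}" using lt by auto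
    hence "card {j\<in>A. K j \<le> K' i} \<le> card ({j\<in>A. K j \<le> K (\<sigma> i)} - {\<sigma> i})"
      by (intro card_mono) (use fA in auto)
    also have "\<dots> = tr K (\<sigma> i) - 1" unfolding tr_def
      using sA[OF i] by (subst card_Diff_singleton) (use fA in auto)
    also have "\<dots> = tr K' i - 1" using trs[OF i] by simp
    finally have "tr K' i \<le> tr K' i - 1" .
    moreover have "tr K' i \<ge> 1" using bK' i by (auto simp: bij_betw_def)
    ultimately show False by simp
  qed
  have cr: "card {j\<in>S-A. K j \<le> K (\<sigma> i)} \<le> card {j\<in>S-A. K' j \<le> K' i}" if i: "i \<in> A" for i
  proof (rule card_mono)
    show "finite {j\<in>S-A. K' j \<le> K' i}" using fS by auto
    show "{j\<in>S-A. K j \<le> K (\<sigma> i)} \<subseteq> {j\<in>S-A. K' j \<le> K' i}"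
    proof
      fix j assume j: "j \<in> {j\<in>S-A. K j \<le> K (\<sigma> i)}"
      hence "K' j \<le> K (\<sigma> i)" using eqC by auto
      hence "K' j \<le> K' i" using Ks[OF i] by (rule order_trans)
      thus "j \<in> {j\<in>S-A. K' j \<le> K' i}" using j by simp
    qed
  qed
  have split: "card {j\<in>S. L j \<le> L x} = tr L x + card {j\<in>S-A. L j \<le> L x}" for L :: "nat \<Rightarrow> 'k" and x
  proof -
    have "{j\<in>S. L j \<le> L x} = {j\<in>A. L j \<le> L x} \<union> {j\<in>S-A. L j \<le> L x}" using AS by auto
    moreover have "card ({j\<in>A. L j \<le> L x} \<union> {j\<in>S-A. L j \<le> L x}) = card {j\<in>A. L j \<le> L x} + card {j\<in>S-A. L j \<le> L x}"
      by (rule card_Un_disjoint) (use fA fS in auto)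
    ultimately show ?thesis unfolding tr_def by simp
  qed
  define g where "g L i = \<phi> (if b then card {j\<in>S. L j \<le> L i} else card {j\<in>S-A. L j \<le> L i})" for L :: "nat \<Rightarrow> 'k" and i
  have "gst b \<phi> S A K = (\<Sum>i\<in>A. g K i)" unfolding gst_def g_def by simp
  also have "\<dots> = (\<Sum>i\<in>A. g K (\<sigma> i))" by (rule sum.reindex_bij_betw[OF bs, symmetric])
  also have "\<dots> \<le> (\<Sum>i\<in>A. g K' i)"
  proof (rule sum_mono)
    fix i assume i: "i \<in> A"
    have "(if b then card {j\<in>S. K j \<le> K (\<sigma> i)} else card {j\<in>S-A. K j \<le> K (\<sigma> i)})
        \<le> (if b then card {j\<in>S. K' j \<le> K' i} else card {j\<in>S-A. K' j \<le> K' i})"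
      using cr[OF i] trs[OF i] split[of K "\<sigma> i"] split[of K' i] by auto
    thus "g K (\<sigma> i) \<le> g K' i" unfolding g_def using mono by (simp add: monoD)
  qed
  also have "\<dots> = gst b \<phi> S A K'" unfolding gst_def g_def by simp
  finally show ?thesis .
qed

lemma dom_of_inj:
  fixes K K' :: "nat \<Rightarrow> 'k::linorder"
  assumes "finite A" "inj_on \<pi> A" "\<pi> ` A \<subseteq> A" "\<forall>i\<in>A. K (\<pi> i) \<le> K' i"
  shows "card {i\<in>A. K' i \<le> x} \<le> card {i\<in>A. K i \<le> x}"
proof -
  have "card {i\<in>A. K' i \<le> x} = card (\<pi> ` {i\<in>A. K' i \<le> x})"
    by (rule card_image[symmetric]) (rule inj_on_subset[OF assms(2)], auto)
  also have "\<dots> \<le> card {i\<in>A. K i \<le> x}"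
    by (rule card_mono) (use assms in \<open>auto intro: order_trans\<close>)
  finally show ?thesis .
qed

lemma gst_transport:
  fixes K K' :: "nat \<Rightarrow> 'k::linorder"
  assumes fS: "finite S" and bs: "bij_betw \<sigma> S S" and AS: "A \<subseteq> S"
    and ord: "\<forall>i\<in>S. \<forall>j\<in>S. (K j \<le> K i \<longleftrightarrow> K' (\<sigma> j) \<le> K' (\<sigma> i))"
  shows "gst b \<phi> S A K = gst b \<phi> S (\<sigma> ` A) K'"
proof -
  have inj: "inj_on \<sigma> S" and img: "\<sigma> ` S = S" using bs by (auto simp: bij_betw_def)
  have key: "{j\<in>\<sigma> ` X. K' j \<le> K' (\<sigma> i)} = \<sigma> ` {j\<in>X. K j \<le> K i}" if "i \<in> S" "X \<subseteq> S" for i X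
  proof
    show "{j\<in>\<sigma> ` X. K' j \<le> K' (\<sigma> i)} \<subseteq> \<sigma> ` {j\<in>X. K j \<le> K i}"
    proof
      fix j assume "j \<in> {j\<in>\<sigma> ` X. K' j \<le> K' (\<sigma> i)}"
      then obtain j0 where j0: "j0 \<in> X" "j = \<sigma> j0" "K' (\<sigma> j0) \<le> K' (\<sigma> i)" by auto
      have "K j0 \<le> K i" using ord that j0 by blast
      thus "j \<in> \<sigma> ` {j\<in>X. K j \<le> K i}" using j0 by auto
    qed
    show "\<sigma> ` {j\<in>X. K j \<le> K i} \<subseteq> {j\<in>\<sigma> ` X. K' j \<le> K' (\<sigma> i)}"
    proof
      fix j assume "j \<in> \<sigma> ` {j\<in>X. K j \<le> K i}"
      then obtain j0 where j0: "j0 \<in> X" "j = \<sigma> j0" "K j0 \<le> K i" by auto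
      have "K' (\<sigma> j0) \<le> K' (\<sigma> i)" using ord that j0 by blast
      thus "j \<in> {j\<in>\<sigma> ` X. K' j \<le> K' (\<sigma> i)}" using j0 by auto
    qed
  qed
  have c: "card {j\<in>\<sigma> ` X. K' j \<le> K' (\<sigma> i)} = card {j\<in>X. K j \<le> K i}" if "i \<in> S" "X \<subseteq> S" for i X
  proof -
    have "inj_on \<sigma> {j\<in>X. K j \<le> K i}" by (rule inj_on_subset[OF inj]) (use that in auto)
    thus ?thesis unfolding key[OF that] by (rule card_image)
  qed
  have d: "S - \<sigma> ` A = \<sigma> ` (S - A)"
    using inj_on_image_set_diff[OF inj, of S A] AS img by auto
  have "gst b \<phi> S (\<sigma> ` A) K' = (\<Sum>i\<in>A. \<phi> (if b then card {j\<in>S. K' j \<le> K' (\<sigma> i)} else card {j\<in>S - \<sigma> ` A. K' j \<le> K' (\<sigma> i)}))"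
    unfolding gst_def by (subst sum.reindex) (use inj_on_subset[OF inj AS] in auto)
  also have "\<dots> = gst b \<phi> S A K"
    unfolding gst_def
  proof (rule sum.cong[OF refl])
    fix i assume i: "i \<in> A"
    have iS: "i \<in> S" using i AS by auto
    have e1: "card {j\<in>S. K' j \<le> K' (\<sigma> i)} = card {j\<in>S. K j \<le> K i}"
      using c[OF iS, of S] img by simp
    have e2: "card {j\<in>S - \<sigma> ` A. K' j \<le> K' (\<sigma> i)} = card {j\<in>S - A. K j \<le> K i}"
      unfolding d by (rule c[OF iS]) auto
    show "\<phi> (if b then card {j\<in>S. K' j \<le> K' (\<sigma> i)} else card {j\<in>S - \<sigma> ` A. K' j \<le> K' (\<sigma> i)}) =
          \<phi> (if b then card {j\<in>S. K j \<le> K i} else card {j\<in>S - A. K j \<le> K i})"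
      by (simp only: e1 e2)
  qed
  finally show ?thesis by simp
qed

lemma card_transport:
  assumes bs: "bij_betw \<sigma> S S" and PQ: "\<And>A. A \<subseteq> S \<Longrightarrow> (P A \<longleftrightarrow> Q (\<sigma> ` A))"
  shows "card {A. A \<subseteq> S \<and> card A = m \<and> P A} = card {A. A \<subseteq> S \<and> card A = m \<and> Q A}"
proof -
  have inj: "inj_on \<sigma> S" and img: "\<sigma> ` S = S" using bs by (auto simp: bij_betw_def)
  define \<tau> where "\<tau> = inv_into S \<sigma>"
  have c1: "\<tau> ` (\<sigma> ` A) = A" if "A \<subseteq> S" for A
    unfolding \<tau>_def using inv_into_image_cancel[OF inj that] .
  have c2: "\<sigma> ` (\<tau> ` B) = B" if "B \<subseteq> S" for B
    unfolding \<tau>_def using image_inv_into_cancel[OF img that] .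
  have tS: "\<tau> ` B \<subseteq> S" if "B \<subseteq> S" for B
  proof
    fix x assume "x \<in> \<tau> ` B"
    then obtain y where y: "y \<in> B" "x = \<tau> y" by auto
    have "y \<in> \<sigma> ` S" using y(1) that img by auto
    thus "x \<in> S" unfolding y(2) \<tau>_def by (rule inv_into_into)
  qed
  have sS: "\<sigma> ` A \<subseteq> S" if "A \<subseteq> S" for A using that img by auto
  have ca: "card (\<sigma> ` A) = card A" if "A \<subseteq> S" for A
    using card_image[OF inj_on_subset[OF inj that]] .
  have cb: "card (\<tau> ` B) = card B" if "B \<subseteq> S" for B
    using ca[OF tS[OF that]] c2[OF that] by simp
  have "bij_betw (image \<sigma>) {A. A \<subseteq> S \<and> card A = m \<and> P A} {A. A \<subseteq> S \<and> card A = m \<and> Q A}"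
  proof (rule bij_betw_byWitness[where f' = "image \<tau>"])
    show "\<forall>a\<in>{A. A \<subseteq> S \<and> card A = m \<and> P A}. \<tau> ` \<sigma> ` a = a" using c1 by auto
    show "\<forall>a'\<in>{A. A \<subseteq> S \<and> card A = m \<and> Q A}. \<sigma> ` \<tau> ` a' = a'" using c2 by auto
    show "image \<sigma> ` {A. A \<subseteq> S \<and> card A = m \<and> P A} \<subseteq> {A. A \<subseteq> S \<and> card A = m \<and> Q A}"
      using sS ca PQ by auto
    show "image \<tau> ` {A. A \<subseteq> S \<and> card A = m \<and> Q A} \<subseteq> {A. A \<subseteq> S \<and> card A = m \<and> P A}"
    proof
      fix X assume "X \<in> image \<tau> ` {A. A \<subseteq> S \<and> card A = m \<and> Q A}"
      then obtain B where B: "B \<subseteq> S" "card B = m" "Q B" "X = \<tau> ` B" by auto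
      have "P X" using PQ[OF tS[OF B(1)]] c2[OF B(1)] B by simp
      thus "X \<in> {A. A \<subseteq> S \<and> card A = m \<and> P A}" using B tS cb by auto
    qed
  qed
  thus ?thesis by (rule bij_betw_same_card)
qed

lemma G_indep:
  assumes fS: "finite S"
  shows "G_fun b \<phi> S m y0 c = G_fun b \<phi> S m y1 c"
proof -
  define K0 where "K0 i = (ereal (y0 i), i)" for i
  define K1 where "K1 i = (ereal (y1 i), i)" for i
  have i0: "inj_on K0 S" unfolding K0_def by (auto simp: inj_on_def)
  have i1: "inj_on K1 S" unfolding K1_def by (auto simp: inj_on_def)
  define r0 where "r0 i = card {j\<in>S. K0 j \<le> K0 i}" for i
  define r1 where "r1 i = card {j\<in>S. K1 j \<le> K1 i}" for i
  have b0: "bij_betw r0 S {1..card S}" unfolding r0_def by (rule rk_bij[OF fS i0])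
  have b1: "bij_betw r1 S {1..card S}" unfolding r1_def by (rule rk_bij[OF fS i1])
  define \<sigma> where "\<sigma> = inv_into S r1 \<circ> r0"
  have bs: "bij_betw \<sigma> S S" unfolding \<sigma>_def using b0 bij_betw_inv_into[OF b1] by (rule bij_betw_trans)
  have rs: "r1 (\<sigma> i) = r0 i" if "i \<in> S" for i
  proof -
    have "r0 i \<in> r0 ` S" using that by simp
    hence "r0 i \<in> r1 ` S" using b0 b1 by (simp add: bij_betw_def)
    thus ?thesis unfolding \<sigma>_def by (simp add: f_inv_into_f)
  qed
  have sS: "\<sigma> i \<in> S" if "i \<in> S" for i using bs that by (meson bij_betwE)
  have ord: "\<forall>i\<in>S. \<forall>j\<in>S. (K0 j \<le> K0 i \<longleftrightarrow> K1 (\<sigma> j) \<le> K1 (\<sigma> i))"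
  proof (intro ballI)
    fix i j assume i: "i \<in> S" and j: "j \<in> S"
    have "K0 j \<le> K0 i \<longleftrightarrow> r0 j \<le> r0 i" unfolding r0_def using rk_le_iff[OF fS i0 i j] by simp
    also have "\<dots> \<longleftrightarrow> r1 (\<sigma> j) \<le> r1 (\<sigma> i)" using rs i j by simp
    also have "\<dots> \<longleftrightarrow> K1 (\<sigma> j) \<le> K1 (\<sigma> i)" unfolding r1_def using rk_le_iff[OF fS i1 sS[OF i] sS[OF j]] by simp
    finally show "K0 j \<le> K0 i \<longleftrightarrow> K1 (\<sigma> j) \<le> K1 (\<sigma> i)" .
  qed
  have PQ: "(c \<le> rank_stat b \<phi> S A (\<lambda>i. ereal (y0 i))) \<longleftrightarrow> (c \<le> rank_stat b \<phi> S (\<sigma> ` A) (\<lambda>i. ereal (y1 i)))"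
    if "A \<subseteq> S" for A
  proof -
    have sA: "\<sigma> ` A \<subseteq> S" using that sS by auto
    have "rank_stat b \<phi> S A (\<lambda>i. ereal (y0 i)) = gst b \<phi> S A K0"
      using rank_stat_gst[OF fS] that unfolding K0_def by (simp add: Int_absorb1)
    also have "\<dots> = gst b \<phi> S (\<sigma> ` A) K1" by (rule gst_transport[OF fS bs that ord])
    also have "\<dots> = rank_stat b \<phi> S (\<sigma> ` A) (\<lambda>i. ereal (y1 i))"
      using rank_stat_gst[OF fS] sA unfolding K1_def by (simp add: Int_absorb1)
    finally show ?thesis by simp
  qed
  have "card {A. A \<subseteq> S \<and> card A = m \<and> c \<le> rank_stat b \<phi> S A (\<lambda>i. ereal (y0 i))}
      = card {A. A \<subseteq> S \<and> card A = m \<and> c \<le> rank_stat b \<phi> S A (\<lambda>i. ereal (y1 i))}"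
    by (rule card_transport[where P="\<lambda>A. c \<le> rank_stat b \<phi> S A (\<lambda>i. ereal (y0 i))"
          and Q="\<lambda>A. c \<le> rank_stat b \<phi> S A (\<lambda>i. ereal (y1 i))", OF bs PQ])
  thus ?thesis unfolding G_fun_def by simp
qed

lemma G_anti:
  assumes "finite S" "c1 \<le> c2"
  shows "G_fun b \<phi> S m y c2 \<le> G_fun b \<phi> S m y c1"
proof -
  have "card {A. A \<subseteq> S \<and> card A = m \<and> c2 \<le> rank_stat b \<phi> S A (\<lambda>i. ereal (y i))}
     \<le> card {A. A \<subseteq> S \<and> card A = m \<and> c1 \<le> rank_stat b \<phi> S A (\<lambda>i. ereal (y i))}"
  proof (rule card_mono)
    show "finite {A. A \<subseteq> S \<and> card A = m \<and> c1 \<le> rank_stat b \<phi> S A (\<lambda>i. ereal (y i))}"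
      by (rule finite_subset[of _ "Pow S"]) (use assms(1) in auto)
    show "{A. A \<subseteq> S \<and> card A = m \<and> c2 \<le> rank_stat b \<phi> S A (\<lambda>i. ereal (y i))}
       \<subseteq> {A. A \<subseteq> S \<and> card A = m \<and> c1 \<le> rank_stat b \<phi> S A (\<lambda>i. ereal (y i))}"
      using assms(2) by auto
  qed
  thus ?thesis unfolding G_fun_def by (intro divide_right_mono) auto
qed

lemma rand_count:
  fixes X :: "'u \<Rightarrow> real"
  assumes fU: "finite U" and a: "0 \<le> \<alpha>"
  shows "real (card {u\<in>U. real (card {v\<in>U. X u \<le> X v}) / real (card U) \<le> \<alpha>}) \<le> \<alpha> * real (card U)"
proof (cases "{u\<in>U. real (card {v\<in>U. X u \<le> X v}) / real (card U) \<le> \<alpha>} = {}")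
  case True
  show ?thesis by (simp only: True) (simp add: a)
next
  case False
  define D where "D = {u\<in>U. real (card {v\<in>U. X u \<le> X v}) / real (card U) \<le> \<alpha>}"
  have fD: "finite D" unfolding D_def using fU by auto
  have neD: "D \<noteq> {}" using False unfolding D_def .
  have "Min (X ` D) \<in> X ` D" using fD neD by (intro Min_in) auto
  then obtain u0 where u0: "u0 \<in> D" "X u0 = Min (X ` D)" by auto
  have minle: "X u0 \<le> X u" if "u \<in> D" for u unfolding u0(2) using fD that by (intro Min_le) auto
  have "D \<subseteq> {v\<in>U. X u0 \<le> X v}" using minle unfolding D_def by auto
  hence "card D \<le> card {v\<in>U. X u0 \<le> X v}" by (intro card_mono) (use fU in auto)
  moreover have "real (card {v\<in>U. X u0 \<le> X v}) / real (card U) \<le> \<alpha>" using u0(1) unfolding D_def by auto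
  moreover have "0 < card U" using u0(1) fU unfolding D_def by (auto simp: card_gt_0_iff)
  ultimately have "real (card D) \<le> \<alpha> * real (card U)"
    by (simp add: pos_divide_le_eq)
  thus ?thesis unfolding D_def .
qed

definition Wt :: "nat \<Rightarrow> (bool \<Rightarrow> bool \<Rightarrow> real) \<Rightarrow> nat set \<Rightarrow> nat set \<Rightarrow> real" where
  "Wt n p M1 M0 = (\<Prod>i<n. p (i \<in> M1) (i \<in> M0))"

definition Omg :: "nat \<Rightarrow> nat \<Rightarrow> (nat set \<times> nat set \<times> nat set) set" where
  "Omg n n1 = {T. T \<subseteq> {..<n} \<and> card T = n1} \<times> Pow {..<n} \<times> Pow {..<n}"

lemma finite_Omg: "finite (Omg n n1)"
  unfolding Omg_def by (intro finite_cartesian_product) (auto intro: finite_subset[of _ "Pow {..<n}"])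

lemma pow_prod:
  fixes f :: "bool \<Rightarrow> 'a \<Rightarrow> real"
  assumes "finite I"
  shows "(\<Sum>X\<in>Pow I. \<Prod>i\<in>I. f (i \<in> X) i) = (\<Prod>i\<in>I. f True i + f False i)"
proof -
  have "(\<Prod>i\<in>I. f True i + f False i) = (\<Sum>X\<in>Pow I. (\<Prod>i\<in>X. f True i) * (\<Prod>i\<in>I - X. f False i))"
    by (rule prod_add[OF assms])
  also have "\<dots> = (\<Sum>X\<in>Pow I. \<Prod>i\<in>I. f (i \<in> X) i)"
  proof (rule sum.cong[OF refl])
    fix X assume "X \<in> Pow I"
    hence XI: "X \<subseteq> I" by simp
    have "(\<Prod>i\<in>I. f (i \<in> X) i) = (\<Prod>i\<in>I - X. f (i \<in> X) i) * (\<Prod>i\<in>X. f (i \<in> X) i)"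
      by (rule prod.subset_diff[OF XI assms])
    also have "(\<Prod>i\<in>I - X. f (i \<in> X) i) = (\<Prod>i\<in>I - X. f False i)" by (rule prod.cong) auto
    also have "(\<Prod>i\<in>X. f (i \<in> X) i) = (\<Prod>i\<in>X. f True i)" by (rule prod.cong) auto
    finally show "(\<Prod>i\<in>X. f True i) * (\<Prod>i\<in>I - X. f False i) = (\<Prod>i\<in>I. f (i \<in> X) i)" by simp
  qed
  finally show ?thesis by simp
qed

lemma mass:
  assumes "p True True + p True False + p False True + p False False = 1"
  shows "(\<Sum>M1\<in>Pow {..<n}. \<Sum>M0\<in>Pow {..<n}. Wt n p M1 M0) = 1"
proof -
  have "(\<Sum>M0\<in>Pow {..<n}. Wt n p M1 M0) = (\<Prod>i<n. p (i \<in> M1) True + p (i \<in> M1) False)" for M1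
    unfolding Wt_def using pow_prod[of "{..<n}" "\<lambda>b i. p (i \<in> M1) b"] by simp
  hence "(\<Sum>M1\<in>Pow {..<n}. \<Sum>M0\<in>Pow {..<n}. Wt n p M1 M0)
      = (\<Sum>M1\<in>Pow {..<n}. \<Prod>i<n. p (i \<in> M1) True + p (i \<in> M1) False)" by simp
  also have "\<dots> = (\<Prod>i<n. (p True True + p True False) + (p False True + p False False))"
    using pow_prod[of "{..<n}" "\<lambda>b i. p b True + p b False"] by simp
  also have "\<dots> = 1" using assms by (simp add: add.assoc)
  finally show ?thesis .
qed

lemma Wt_nonneg: "\<forall>m m'. 0 \<le> p m m' \<Longrightarrow> 0 \<le> Wt n p M1 M0"
  unfolding Wt_def by (intro prod_nonneg) auto

lemma prob_ev_flat:
  "prob_ev n n1 p E = (\<Sum>(T, M1, M0)\<in>Omg n n1. if E T M1 M0 then Wt n p M1 M0 else 0) / real (n choose n1)"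
proof -
  have "prob_ev n n1 p E = (\<Sum>T\<in>{T. T \<subseteq> {..<n} \<and> card T = n1}. \<Sum>M1\<in>Pow {..<n}. \<Sum>M0\<in>Pow {..<n}.
          (if E T M1 M0 then Wt n p M1 M0 else 0) / real (n choose n1))"
    unfolding prob_ev_def Wt_def by (intro sum.cong refl) auto
  also have "\<dots> = (\<Sum>T\<in>{T. T \<subseteq> {..<n} \<and> card T = n1}. \<Sum>M1\<in>Pow {..<n}. \<Sum>M0\<in>Pow {..<n}.
          (if E T M1 M0 then Wt n p M1 M0 else 0)) / real (n choose n1)"
    by (simp add: sum_divide_distrib)
  also have "(\<Sum>T\<in>{T. T \<subseteq> {..<n} \<and> card T = n1}. \<Sum>M1\<in>Pow {..<n}. \<Sum>M0\<in>Pow {..<n}.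
          (if E T M1 M0 then Wt n p M1 M0 else 0)) = (\<Sum>(T, M1, M0)\<in>Omg n n1. if E T M1 M0 then Wt n p M1 M0 else 0)"
    unfolding Omg_def by (simp add: sum.cartesian_product)
  finally show ?thesis .
qed

lemma card_U: "n1 \<le> n \<Longrightarrow> card {T. T \<subseteq> {..<n} \<and> card T = n1} = n choose n1"
  using n_subsets[of "{..<n}" n1] by simp

lemma Omg_mass:
  assumes "p True True + p True False + p False True + p False False = 1" "n1 \<le> n"
  shows "(\<Sum>(T, M1, M0)\<in>Omg n n1. Wt n p M1 M0) = real (n choose n1)"
proof -
  have "(\<Sum>(T, M1, M0)\<in>Omg n n1. Wt n p M1 M0) = (\<Sum>T\<in>{T. T \<subseteq> {..<n} \<and> card T = n1}. \<Sum>M1\<in>Pow {..<n}. \<Sum>M0\<in>Pow {..<n}. Wt n p M1 M0)"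
    unfolding Omg_def by (simp only: sum.cartesian_product)
  also have "\<dots> = (\<Sum>T\<in>{T. T \<subseteq> {..<n} \<and> card T = n1}. 1)" using mass[OF assms(1)] by simp
  also have "\<dots> = real (n choose n1)" using card_U[OF assms(2)] by simp
  finally show ?thesis .
qed

lemma prob_total:
  assumes "p True True + p True False + p False True + p False False = 1" "n1 \<le> n"
  shows "prob_ev n n1 p (\<lambda>_ _ _. True) = 1"
proof -
  have pos: "real (n choose n1) > 0" using assms(2) by simp
  show ?thesis unfolding prob_ev_flat using Omg_mass[OF assms] pos by (simp add: case_prod_beta)
qed

lemma prob_compl:
  "prob_ev n n1 p E + prob_ev n n1 p (\<lambda>T M1 M0. \<not> E T M1 M0) = prob_ev n n1 p (\<lambda>_ _ _. True)"
  unfolding prob_ev_def by (simp only: sum.distrib[symmetric]) (intro sum.cong refl, simp)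

lemma prob_mono:
  assumes "\<forall>m m'. 0 \<le> p m m'" "\<And>T M1 M0. E T M1 M0 \<Longrightarrow> E' T M1 M0"
  shows "prob_ev n n1 p E \<le> prob_ev n n1 p E'"
  unfolding prob_ev_def
proof (intro sum_mono)
  fix T M1 M0
  have "0 \<le> (\<Prod>i<n. p (i \<in> M1) (i \<in> M0)) / real (n choose n1)"
    using assms(1) by (intro divide_nonneg_nonneg prod_nonneg) auto
  thus "(if E T M1 M0 then (\<Prod>i<n. p (i \<in> M1) (i \<in> M0)) / real (n choose n1) else 0)
      \<le> (if E' T M1 M0 then (\<Prod>i<n. p (i \<in> M1) (i \<in> M0)) / real (n choose n1) else 0)"
    using assms(2)[of T M1 M0] by auto
qed

definition keyf :: "nat \<Rightarrow> nat set \<times> nat set \<times> nat set \<Rightarrow> nat set \<times> nat set" where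
  "keyf n = (\<lambda>(T, M1, M0). (obs n T M1 M0, obs n T M1 M0 \<inter> T))"

definition wgt :: "nat \<Rightarrow> (bool \<Rightarrow> bool \<Rightarrow> real) \<Rightarrow> nat set \<times> nat set \<times> nat set \<Rightarrow> real" where
  "wgt n p = (\<lambda>(T, M1, M0). Wt n p M1 M0)"

definition Phi :: "(nat \<Rightarrow> nat) \<Rightarrow> nat set \<times> nat set \<times> nat set \<Rightarrow> nat set \<times> nat set \<times> nat set" where
  "Phi \<pi> = (\<lambda>(T, M1, M0). (\<pi> ` T, \<pi> ` M1, \<pi> ` M0))"

lemma perm_exists:
  assumes fs: "finite s" and a: "a \<subseteq> s" and a': "a' \<subseteq> s" and c: "card a = card a'"
  shows "\<exists>\<pi>. bij \<pi> \<and> \<pi> ` s = s \<and> \<pi> ` a = a' \<and> (\<forall>x. x \<notin> s \<longrightarrow> \<pi> x = x)"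
proof -
  have fa: "finite a" "finite a'" using fs a a' finite_subset by blast+
  obtain f where f: "bij_betw f a a'" using finite_same_card_bij[OF fa c] by blast
  have "card (s - a) = card (s - a')" using c fa a a' by (simp add: card_Diff_subset)
  then obtain g where g: "bij_betw g (s - a) (s - a')" using finite_same_card_bij fs by blast
  define \<pi> where "\<pi> x = (if x \<in> a then f x else if x \<in> s then g x else x)" for x
  have b1: "bij_betw \<pi> a a'" using f by (subst bij_betw_cong[where g = f]) (auto simp: \<pi>_def)
  have b2: "bij_betw \<pi> (s - a) (s - a')" using g by (subst bij_betw_cong[where g = g]) (auto simp: \<pi>_def)
  have b3: "bij_betw \<pi> (UNIV - s) (UNIV - s)"
    by (subst bij_betw_cong[where g = id]) (auto simp: \<pi>_def a[THEN subsetD])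
  have b12: "bij_betw \<pi> (a \<union> (s - a)) (a' \<union> (s - a'))" by (rule bij_betw_combine[OF b1 b2]) auto
  have b123: "bij_betw \<pi> ((a \<union> (s - a)) \<union> (UNIV - s)) ((a' \<union> (s - a')) \<union> (UNIV - s))"
    by (rule bij_betw_combine[OF b12 b3]) (use a' in auto)
  have u1: "(a \<union> (s - a)) \<union> (UNIV - s) = UNIV" and u2: "(a' \<union> (s - a')) \<union> (UNIV - s) = UNIV" by auto
  have "bij \<pi>" using b123 unfolding u1 u2 .
  moreover have "\<pi> ` s = s"
  proof -
    have "\<pi> ` (a \<union> (s - a)) = a' \<union> (s - a')" using b12 by (simp add: bij_betw_def)
    moreover have "a \<union> (s - a) = s" "a' \<union> (s - a') = s" using a a' by auto
    ultimately show ?thesis by simp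
  qed
  moreover have "\<pi> ` a = a'" using b1 by (simp add: bij_betw_def)
  moreover have "\<forall>x. x \<notin> s \<longrightarrow> \<pi> x = x" using a by (auto simp: \<pi>_def)
  ultimately show ?thesis by blast
qed

lemma obs_img:
  assumes bp: "bij \<pi>" and N: "\<pi> ` {..<n} = {..<n}"
  shows "obs n (\<pi> ` T) (\<pi> ` M1) (\<pi> ` M0) = \<pi> ` obs n T M1 M0"
proof -
  have inj: "inj \<pi>" using bp by (simp add: bij_def)
  have lt: "\<pi> i < n \<longleftrightarrow> i < n" for i
  proof -
    have "\<pi> i \<in> \<pi> ` {..<n} \<longleftrightarrow> i \<in> {..<n}" by (rule inj_image_mem_iff[OF inj])
    thus ?thesis using N by simp
  qed
  show ?thesis
  proof
    show "obs n (\<pi> ` T) (\<pi> ` M1) (\<pi> ` M0) \<subseteq> \<pi> ` obs n T M1 M0"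
    proof
      fix x assume x: "x \<in> obs n (\<pi> ` T) (\<pi> ` M1) (\<pi> ` M0)"
      hence "x \<in> {..<n}" unfolding obs_def by auto
      hence "x \<in> \<pi> ` {..<n}" using N by simp
      then obtain i where i: "i < n" "x = \<pi> i" by auto
      have "i \<in> obs n T M1 M0" using x i unfolding obs_def by (auto simp: inj_image_mem_iff[OF inj])
      thus "x \<in> \<pi> ` obs n T M1 M0" using i by auto
    qed
    show "\<pi> ` obs n T M1 M0 \<subseteq> obs n (\<pi> ` T) (\<pi> ` M1) (\<pi> ` M0)"
    proof
      fix x assume "x \<in> \<pi> ` obs n T M1 M0"
      then obtain i where i: "i \<in> obs n T M1 M0" "x = \<pi> i" by auto
      have m: "\<pi> i \<in> \<pi> ` X \<longleftrightarrow> i \<in> X" for X by (rule inj_image_mem_iff[OF inj])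
      show "x \<in> obs n (\<pi> ` T) (\<pi> ` M1) (\<pi> ` M0)"
        using i unfolding obs_def by (simp only: m lt mem_Collect_eq lessThan_iff) simp
    qed
  qed
qed

lemma Wt_img:
  assumes bp: "bij \<pi>" and N: "\<pi> ` {..<n} = {..<n}"
  shows "Wt n p (\<pi> ` M1) (\<pi> ` M0) = Wt n p M1 M0"
proof -
  have inj: "inj \<pi>" using bp by (simp add: bij_def)
  have "inj_on \<pi> {..<n}" by (rule inj_on_subset[OF inj subset_UNIV])
  hence bb: "bij_betw \<pi> {..<n} {..<n}" using N by (simp add: bij_betw_def)
  have "Wt n p (\<pi> ` M1) (\<pi> ` M0) = (\<Prod>i<n. p (\<pi> i \<in> \<pi> ` M1) (\<pi> i \<in> \<pi> ` M0))"
    unfolding Wt_def by (rule prod.reindex_bij_betw[OF bb, symmetric])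
  also have "\<dots> = Wt n p M1 M0" unfolding Wt_def by (simp add: inj_image_mem_iff[OF inj])
  finally show ?thesis .
qed

lemma Phi_key:
  assumes bp: "bij \<pi>" and N: "\<pi> ` {..<n} = {..<n}"
    and om: "\<omega> \<in> Omg n n1" and k: "keyf n \<omega> = (s0, a0)"
  shows "Phi \<pi> \<omega> \<in> Omg n n1 \<and> keyf n (Phi \<pi> \<omega>) = (\<pi> ` s0, \<pi> ` a0) \<and> wgt n p (Phi \<pi> \<omega>) = wgt n p \<omega>"
proof -
  obtain T M1 M0 where w: "\<omega> = (T, M1, M0)" by (cases \<omega>) auto
  have inj: "inj \<pi>" using bp by (simp add: bij_def)
  have T: "T \<subseteq> {..<n}" "card T = n1" "M1 \<subseteq> {..<n}" "M0 \<subseteq> {..<n}" using om unfolding w Omg_def by auto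
  have sub: "\<pi> ` X \<subseteq> {..<n}" if "X \<subseteq> {..<n}" for X using image_mono[OF that, of \<pi>] N by simp
  have "\<pi> ` T \<subseteq> {..<n}" "\<pi> ` M1 \<subseteq> {..<n}" "\<pi> ` M0 \<subseteq> {..<n}" using T sub by auto
  moreover have "card (\<pi> ` T) = n1" using T card_image[OF inj_on_subset[OF inj]] by auto
  ultimately have "Phi \<pi> \<omega> \<in> Omg n n1" unfolding w Phi_def Omg_def by auto
  moreover have "keyf n (Phi \<pi> \<omega>) = (\<pi> ` s0, \<pi> ` a0)"
    using k unfolding w Phi_def keyf_def by (auto simp: obs_img[OF bp N] image_Int[OF inj, symmetric])
  moreover have "wgt n p (Phi \<pi> \<omega>) = wgt n p \<omega>" unfolding w Phi_def wgt_def by (simp add: Wt_img[OF bp N])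
  ultimately show ?thesis by blast
qed

lemma V_const:
  assumes sN: "s \<subseteq> {..<n}" and a: "a \<subseteq> s" and a': "a' \<subseteq> s" and c: "card a = card a'"
  shows "(\<Sum>\<omega>\<in>{\<omega>\<in>Omg n n1. keyf n \<omega> = (s, a)}. wgt n p \<omega>) = (\<Sum>\<omega>\<in>{\<omega>\<in>Omg n n1. keyf n \<omega> = (s, a')}. wgt n p \<omega>)"
proof -
  have fs: "finite s" using sN finite_subset by blast
  obtain \<pi> where \<pi>: "bij \<pi>" "\<pi> ` s = s" "\<pi> ` a = a'" "\<forall>x. x \<notin> s \<longrightarrow> \<pi> x = x"
    using perm_exists[OF fs a a' c] by blast
  have inj: "inj \<pi>" using \<pi>(1) by (simp add: bij_def)
  have N: "\<pi> ` {..<n} = {..<n}"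
  proof -
    have "{..<n} = s \<union> ({..<n} - s)" using sN by auto
    moreover have "\<pi> ` ({..<n} - s) = {..<n} - s" using \<pi>(4) by (auto simp: image_iff)
    ultimately show ?thesis using \<pi>(2) by (metis image_Un)
  qed
  define \<rho> where "\<rho> = inv \<pi>"
  have bq: "bij \<rho>" unfolding \<rho>_def by (rule bij_imp_bij_inv[OF \<pi>(1)])
  have injq: "inj \<rho>" using bq by (simp add: bij_def)
  have qq: "\<rho> ` \<pi> ` X = X" for X unfolding \<rho>_def by (rule image_inv_f_f[OF inj])
  have pq: "\<pi> ` \<rho> ` X = X" for X
    using image_inv_f_f[OF injq, of X] unfolding \<rho>_def inv_inv_eq[OF \<pi>(1)] .
  have Nq: "\<rho> ` {..<n} = {..<n}" using qq[of "{..<n}"] N by simp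
  have sq: "\<rho> ` s = s" using qq[of s] \<pi>(2) by simp
  have aq: "\<rho> ` a' = a" using qq[of a] \<pi>(3) by simp
  show ?thesis
  proof (rule sum.reindex_bij_witness[where j = "Phi \<pi>" and i = "Phi \<rho>"])
    fix \<omega> assume w: "\<omega> \<in> {\<omega>\<in>Omg n n1. keyf n \<omega> = (s, a)}"
    show "Phi \<rho> (Phi \<pi> \<omega>) = \<omega>" unfolding Phi_def by (cases \<omega>) (simp add: qq)
    show "Phi \<pi> \<omega> \<in> {\<omega>\<in>Omg n n1. keyf n \<omega> = (s, a')}"
      using Phi_key[OF \<pi>(1) N, of \<omega> n1 s a p] w \<pi>(2,3) by auto
    show "wgt n p (Phi \<pi> \<omega>) = wgt n p \<omega>"
      using Phi_key[OF \<pi>(1) N, of \<omega> n1 s a p] w by auto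
  next
    fix \<omega> assume w: "\<omega> \<in> {\<omega>\<in>Omg n n1. keyf n \<omega> = (s, a')}"
    show "Phi \<pi> (Phi \<rho> \<omega>) = \<omega>" unfolding Phi_def by (cases \<omega>) (simp add: pq)
    show "Phi \<rho> \<omega> \<in> {\<omega>\<in>Omg n n1. keyf n \<omega> = (s, a)}"
      using Phi_key[OF bq Nq, of \<omega> n1 s a' p] w sq aq by auto
  qed
qed

lemma prob_bad:
  assumes p0: "\<forall>m m'. 0 \<le> p m m'"
    and p1: "p True True + p True False + p False True + p False False = 1"
    and nn: "n1 \<le> n" and a0: "0 \<le> \<alpha>"
    and HF: "\<And>s m. s \<subseteq> {..<n} \<Longrightarrow>
      real (card {a. a \<subseteq> s \<and> card a = m \<and> F s a}) \<le> \<alpha> * real (card {a. a \<subseteq> s \<and> card a = m})"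
  shows "prob_ev n n1 p (\<lambda>T M1 M0. F (obs n T M1 M0) (obs n T M1 M0 \<inter> T)) \<le> \<alpha>"
proof -
  define \<Omega> where "\<Omega> = Omg n n1"
  define KS where "KS = Sigma (Pow {..<n}) Pow"
  define V where "V s a = (\<Sum>\<omega>\<in>{\<omega>\<in>\<Omega>. keyf n \<omega> = (s, a)}. wgt n p \<omega>)" for s a
  define C where "C = real (n choose n1)"
  have Cpos: "C > 0" unfolding C_def using nn by simp
  have f\<Omega>: "finite \<Omega>" unfolding \<Omega>_def by (rule finite_Omg)
  have fKS: "finite KS" unfolding KS_def by (intro finite_SigmaI) (auto intro: finite_subset[of _ "{..<n}"])
  have keyKS: "keyf n ` \<Omega> \<subseteq> KS"
  proof
    fix k assume "k \<in> keyf n ` \<Omega>"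
    then obtain T M1 M0 where "k = keyf n (T, M1, M0)" by auto
    thus "k \<in> KS" unfolding KS_def keyf_def obs_def by auto
  qed
  have w0: "0 \<le> wgt n p \<omega>" for \<omega> unfolding wgt_def using Wt_nonneg[OF p0] by (simp add: case_prod_beta)
  have V0: "0 \<le> V s a" for s a unfolding V_def using w0 by (intro sum_nonneg) auto
  define h where "h \<omega> = (if F (fst (keyf n \<omega>)) (snd (keyf n \<omega>)) then wgt n p \<omega> else 0)" for \<omega>
  have flat: "prob_ev n n1 p (\<lambda>T M1 M0. F (obs n T M1 M0) (obs n T M1 M0 \<inter> T)) = (\<Sum>\<omega>\<in>\<Omega>. h \<omega>) / C"
    unfolding prob_ev_flat C_def \<Omega>_def
    by (intro arg_cong[where f = "\<lambda>x. x / _"] sum.cong refl) (auto simp: h_def keyf_def wgt_def split: prod.splits)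
  have g1: "(\<Sum>\<omega>\<in>\<Omega>. h \<omega>) = (\<Sum>(s, a)\<in>KS. if F s a then V s a else 0)"
  proof -
    have "(\<Sum>\<omega>\<in>\<Omega>. h \<omega>) = (\<Sum>k\<in>KS. \<Sum>\<omega>\<in>{\<omega>\<in>\<Omega>. keyf n \<omega> = k}. h \<omega>)"
      by (rule sum.group[OF f\<Omega> fKS keyKS, symmetric])
    also have "\<dots> = (\<Sum>(s, a)\<in>KS. if F s a then V s a else 0)"
    proof (rule sum.cong[OF refl])
      fix k assume "k \<in> KS"
      obtain s a where k: "k = (s, a)" by (cases k) auto
      have "(\<Sum>\<omega>\<in>{\<omega>\<in>\<Omega>. keyf n \<omega> = k}. h \<omega>) = (\<Sum>\<omega>\<in>{\<omega>\<in>\<Omega>. keyf n \<omega> = k}. if F s a then wgt n p \<omega> else 0)"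
        by (rule sum.cong[OF refl]) (auto simp: h_def k)
      also have "\<dots> = (if F s a then V s a else 0)" unfolding V_def k by simp
      finally show "(\<Sum>\<omega>\<in>{\<omega>\<in>\<Omega>. keyf n \<omega> = k}. h \<omega>) = (case k of (s, a) \<Rightarrow> if F s a then V s a else 0)"
        unfolding k by simp
    qed
    finally show ?thesis .
  qed
  have g2: "(\<Sum>\<omega>\<in>\<Omega>. wgt n p \<omega>) = (\<Sum>(s, a)\<in>KS. V s a)"
  proof -
    have "(\<Sum>\<omega>\<in>\<Omega>. wgt n p \<omega>) = (\<Sum>k\<in>KS. \<Sum>\<omega>\<in>{\<omega>\<in>\<Omega>. keyf n \<omega> = k}. wgt n p \<omega>)"
      by (rule sum.group[OF f\<Omega> fKS keyKS, symmetric])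
    also have "\<dots> = (\<Sum>(s, a)\<in>KS. V s a)"
      by (rule sum.cong[OF refl]) (auto simp: V_def)
    finally show ?thesis .
  qed
  have tot: "(\<Sum>\<omega>\<in>\<Omega>. wgt n p \<omega>) = C"
    unfolding \<Omega>_def C_def wgt_def using Omg_mass[OF p1 nn] by simp
  have per_s: "(\<Sum>a\<in>Pow s. if F s a then V s a else 0) \<le> \<alpha> * (\<Sum>a\<in>Pow s. V s a)"
    if sN: "s \<subseteq> {..<n}" for s
  proof -
    have fs: "finite s" using sN finite_subset by blast
    have fP: "finite (Pow s)" using fs by simp
    have cP: "card ` Pow s \<subseteq> {..card s}" using fs by (auto intro: card_mono)
    have per_m: "(\<Sum>a\<in>{a\<in>Pow s. card a = m}. if F s a then V s a else 0) \<le> \<alpha> * (\<Sum>a\<in>{a\<in>Pow s. card a = m}. V s a)" for m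
    proof (cases "{a\<in>Pow s. card a = m} = {}")
      case True
      show ?thesis by (simp only: True sum.empty)
    next
      case False
      then obtain a0 where a0: "a0 \<subseteq> s" "card a0 = m" by auto
      define D where "D = {a\<in>Pow s. card a = m}"
      have fD: "finite D" unfolding D_def using fP by auto
      have Vc: "V s a = V s a0" if "a \<in> D" for a
      proof -
        have "(\<Sum>\<omega>\<in>{\<omega>\<in>Omg n n1. keyf n \<omega> = (s, a)}. wgt n p \<omega>) = (\<Sum>\<omega>\<in>{\<omega>\<in>Omg n n1. keyf n \<omega> = (s, a0)}. wgt n p \<omega>)"
          by (rule V_const[OF sN]) (use that a0 in \<open>auto simp: D_def\<close>)
        thus ?thesis unfolding V_def \<Omega>_def .
      qed
      have "(\<Sum>a\<in>D. if F s a then V s a else 0) = (\<Sum>a\<in>D. if F s a then V s a0 else 0)"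
        by (rule sum.cong[OF refl]) (simp add: Vc)
      also have "\<dots> = (\<Sum>a\<in>{a\<in>D. F s a}. V s a0)"
        by (rule sum.inter_filter[OF fD, symmetric])
      also have "\<dots> = V s a0 * real (card {a\<in>D. F s a})" by simp
      also have "{a\<in>D. F s a} = {a. a \<subseteq> s \<and> card a = m \<and> F s a}" unfolding D_def by auto
      also have "V s a0 * real (card {a. a \<subseteq> s \<and> card a = m \<and> F s a}) \<le> V s a0 * (\<alpha> * real (card {a. a \<subseteq> s \<and> card a = m}))"
        by (rule mult_left_mono[OF HF[OF sN] V0])
      also have "{a. a \<subseteq> s \<and> card a = m} = D" unfolding D_def by auto
      also have "V s a0 * (\<alpha> * real (card D)) = \<alpha> * (\<Sum>a\<in>D. V s a0)" by simp
      also have "(\<Sum>a\<in>D. V s a0) = (\<Sum>a\<in>D. V s a)" by (rule sum.cong[OF refl]) (simp add: Vc)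
      finally show ?thesis unfolding D_def .
    qed
    have "(\<Sum>a\<in>Pow s. if F s a then V s a else 0) = (\<Sum>m\<in>{..card s}. \<Sum>a\<in>{a\<in>Pow s. card a = m}. if F s a then V s a else 0)"
      by (rule sum.group[OF fP _ cP, symmetric]) simp
    also have "\<dots> \<le> (\<Sum>m\<in>{..card s}. \<alpha> * (\<Sum>a\<in>{a\<in>Pow s. card a = m}. V s a))"
      by (rule sum_mono) (rule per_m)
    also have "\<dots> = \<alpha> * (\<Sum>m\<in>{..card s}. \<Sum>a\<in>{a\<in>Pow s. card a = m}. V s a)" by (simp add: sum_distrib_left)
    also have "(\<Sum>m\<in>{..card s}. \<Sum>a\<in>{a\<in>Pow s. card a = m}. V s a) = (\<Sum>a\<in>Pow s. V s a)"
      by (rule sum.group[OF fP _ cP]) simp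
    finally show ?thesis .
  qed
  have "(\<Sum>(s, a)\<in>KS. if F s a then V s a else 0) = (\<Sum>s\<in>Pow {..<n}. \<Sum>a\<in>Pow s. if F s a then V s a else 0)"
    unfolding KS_def by (rule sum.Sigma[symmetric]) (auto intro: finite_subset)
  also have "\<dots> \<le> (\<Sum>s\<in>Pow {..<n}. \<alpha> * (\<Sum>a\<in>Pow s. V s a))"
    by (rule sum_mono) (rule per_s, simp)
  also have "\<dots> = \<alpha> * (\<Sum>s\<in>Pow {..<n}. \<Sum>a\<in>Pow s. V s a)" by (simp add: sum_distrib_left)
  also have "(\<Sum>s\<in>Pow {..<n}. \<Sum>a\<in>Pow s. V s a) = (\<Sum>(s, a)\<in>KS. V s a)"
    unfolding KS_def by (rule sum.Sigma) (auto intro: finite_subset)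
  finally have "(\<Sum>\<omega>\<in>\<Omega>. h \<omega>) \<le> \<alpha> * C" using g1 g2 tot by simp
  hence "(\<Sum>\<omega>\<in>\<Omega>. h \<omega>) / C \<le> \<alpha>" using Cpos by (simp add: pos_divide_le_eq)
  thus ?thesis using flat by simp
qed

lemma obs_sub: "obs n T M1 M0 \<subseteq> {..<n}" unfolding obs_def by auto

lemma obs_fin: "finite (obs n T M1 M0)" by (rule finite_subset[OF obs_sub]) simp

lemma swap_props:
  assumes ih: "inj_on h X" and hY: "h ` X \<subseteq> Y" and d: "X \<inter> Y = {}"
    and pd: "\<And>x. \<pi> x = (if x \<in> X then h x else if x \<in> h ` X then inv_into X h x else x)"
  shows "inj \<pi>" and "\<And>x. x \<in> X \<Longrightarrow> \<pi> x = h x"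
    and "\<And>y. y \<in> h ` X \<Longrightarrow> \<pi> y \<in> X \<and> h (\<pi> y) = y"
    and "\<And>x. x \<notin> X \<Longrightarrow> x \<notin> h ` X \<Longrightarrow> \<pi> x = x"
proof -
  show px: "\<And>x. x \<in> X \<Longrightarrow> \<pi> x = h x" using pd by presburger
  have nX: "y \<notin> X" if "y \<in> h ` X" for y using that hY d by blast
  show py: "\<And>y. y \<in> h ` X \<Longrightarrow> \<pi> y \<in> X \<and> h (\<pi> y) = y"
  proof -
    fix y assume y: "y \<in> h ` X"
    have e: "\<pi> y = inv_into X h y" using pd[of y] y nX[OF y] by presburger
    have "inv_into X h y \<in> X" using y by (rule inv_into_into)
    moreover have "h (inv_into X h y) = y" using y by (rule f_inv_into_f)
    ultimately show "\<pi> y \<in> X \<and> h (\<pi> y) = y" unfolding e by blast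
  qed
  show pz: "\<And>x. x \<notin> X \<Longrightarrow> x \<notin> h ` X \<Longrightarrow> \<pi> x = x" using pd by presburger
  show "inj \<pi>"
  proof (rule injI)
    fix x y assume e: "\<pi> x = \<pi> y"
    have cl: "\<pi> z \<in> Y \<and> \<pi> z \<in> h ` X" if "z \<in> X" for z using px[OF that] that hY by auto
    have c2: "\<pi> z \<in> X" if "z \<notin> X" "z \<in> h ` X" for z using py[OF that(2)] by blast
    have c3: "\<pi> z = z" if "z \<notin> X" "z \<notin> h ` X" for z using pz[OF that] .
    show "x = y"
    proof (cases "x \<in> X")
      case xX: True
      show ?thesis
      proof (cases "y \<in> X")
        case True
        have "h x = h y" using e px[OF xX] px[OF True] by simp
        thus ?thesis using inj_onD[OF ih _ xX True] by blast
      next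
        case False
        show ?thesis
        proof (cases "y \<in> h ` X")
          case True
          have "\<pi> y \<in> Y" using cl[OF xX] unfolding e by blast
          moreover have "\<pi> y \<in> X" using c2[OF False True] .
          ultimately show ?thesis using d by blast
        next
          case yn: False
          have "\<pi> y \<in> h ` X" using cl[OF xX] unfolding e by blast
          hence "y \<in> h ` X" unfolding c3[OF False yn] .
          thus ?thesis using yn by blast
        qed
      qed
    next
      case xn: False
      show ?thesis
      proof (cases "x \<in> h ` X")
        case xh: True
        show ?thesis
        proof (cases "y \<in> X")
          case True
          have "\<pi> y \<in> Y" using cl[OF True] by blast
          moreover have "\<pi> y \<in> X" using c2[OF xn xh] unfolding e .
          ultimately show ?thesis using d by blast
        next
          case yn: False
          show ?thesis
          proof (cases "y \<in> h ` X")
            case True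
            have h1: "h (\<pi> x) = x" using py[OF xh] by blast
            have h2: "h (\<pi> y) = y" using py[OF True] by blast
            have "x = h (\<pi> y)" using h1 e by (simp only:)
            thus ?thesis using h2 by (simp only:)
          next
            case False
            have "\<pi> y \<in> X" using c2[OF xn xh] unfolding e .
            hence "y \<in> X" unfolding c3[OF yn False] .
            thus ?thesis using yn by blast
          qed
        qed
      next
        case xh: False
        have ex: "\<pi> x = x" using c3[OF xn xh] .
        show ?thesis
        proof (cases "y \<in> X")
          case True
          have "\<pi> y \<in> h ` X" using cl[OF True] by blast
          hence "\<pi> x \<in> h ` X" unfolding e .
          hence "x \<in> h ` X" unfolding ex .
          thus ?thesis using xh by blast
        next
          case yn: False
          show ?thesis
          proof (cases "y \<in> h ` X")
            case True
            have "\<pi> y \<in> X" using c2[OF yn True] .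
            hence "\<pi> x \<in> X" unfolding e .
            hence "x \<in> X" unfolding ex .
            thus ?thesis using xn by blast
          next
            case False
            have "x = \<pi> x" using ex by (rule sym)
            also have "\<dots> = \<pi> y" by (rule e)
            also have "\<dots> = y" by (rule c3[OF yn False])
            finally show ?thesis .
          qed
        qed
      qed
    qed
  qed
qed

lemma Jset_eq:
  "Jset n Y1 Y0 T M1 M0 k = {i\<in>obs n T M1 M0 \<inter> T. k < card {j\<in>obs n T M1 M0 \<inter> T.
      (ereal (yobs Y1 Y0 T j), j) \<le> (ereal (yobs Y1 Y0 T i), i)}}"
proof -
  have e: "(psi i j (ereal (yobs Y1 Y0 T i)) (ereal (yobs Y1 Y0 T j)) = 1) \<longleftrightarrow>
      (ereal (yobs Y1 Y0 T j), j) \<le> (ereal (yobs Y1 Y0 T i), i)" for i j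
    using psi_eq[of i j "\<lambda>i. ereal (yobs Y1 Y0 T i)"] by simp
  show ?thesis unfolding Jset_def e ..
qed

lemma stat_le:
  assumes mono: "mono \<phi>" and H: "Hto n Y1 Y0 T M1 M0 k c"
  shows "rank_stat b \<phi> (obs n T M1 M0) (T \<inter> obs n T M1 M0) (vvec n Y1 Y0 T M1 M0 k c)
       \<le> rank_stat b \<phi> (obs n T M1 M0) (obs n T M1 M0 \<inter> T) (\<lambda>i. ereal (Y0 i))"
proof -
  define S where "S = obs n T M1 M0"
  define A where "A = S \<inter> T"
  define m where "m = card A"
  have fS: "finite S" unfolding S_def by (rule obs_fin)
  have fA: "finite A" unfolding A_def using fS by simp
  have AS: "A \<subseteq> S" unfolding A_def by simp
  define KY where "KY i = (ereal (yobs Y1 Y0 T i), i)" for i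
  define tr where "tr i = card {j\<in>A. KY j \<le> KY i}" for i
  define J where "J = Jset n Y1 Y0 T M1 M0 k"
  have J: "J = {i\<in>A. k < tr i}" unfolding J_def Jset_eq tr_def KY_def A_def S_def ..
  have iKY: "inj_on KY A" unfolding KY_def by (auto simp: inj_on_def)
  have btr: "bij_betw tr A {1..m}" unfolding tr_def m_def by (rule rk_bij[OF fA iKY])
  have JA: "J \<subseteq> A" unfolding J by auto
  have cJ: "card J = m - k"
  proof -
    have itr: "inj_on tr A" using btr by (simp add: bij_betw_def)
    have "tr ` J = {x\<in>tr ` A. k < x}" unfolding J by auto
    also have "\<dots> = {Suc k..m}" using btr by (auto simp: bij_betw_def)
    finally have "card J = card {Suc k..m}" using card_image[OF inj_on_subset[OF itr JA]] by simp
    thus ?thesis by simp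
  qed
  have ord: "KY i < KY j" if "i \<in> A - J" "j \<in> J" for i j
  proof -
    have "tr i \<le> k" "k < tr j" using that unfolding J by auto
    hence "\<not> tr j \<le> tr i" by simp
    hence "\<not> KY j \<le> KY i" unfolding tr_def using rk_le_iff[OF fA iKY, of i j] that JA by auto
    thus ?thesis by simp
  qed
  define B where "B = {i\<in>A. c < Y1 i - Y0 i}"
  have cB: "card B \<le> m - k" using H unfolding Hto_def B_def m_def A_def S_def nS1_def by simp
  have fB: "finite B" "finite J" using fA finite_subset[OF JA fA] unfolding B_def by simp_all
  have "card (B - J) \<le> card (J - B)"
  proof -
    have "card (B - J) = card B - card (B \<inter> J)" using fB by (simp add: card_Diff_subset_Int)
    moreover have "card (J - B) = card J - card (J \<inter> B)" using fB by (simp add: card_Diff_subset_Int)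
    moreover have "card (B \<inter> J) \<le> card B" by (rule card_mono[OF fB(1) Int_lower1])
    moreover have "card (J \<inter> B) \<le> card J" by (rule card_mono[OF fB(2) Int_lower1])
    moreover have "B \<inter> J = J \<inter> B" by auto
    ultimately show ?thesis using cB cJ by simp
  qed
  from card_le_inj[OF finite_Diff[OF fB(1)] finite_Diff[OF fB(2)] this]
  obtain h where h: "h ` (B - J) \<subseteq> J - B" "inj_on h (B - J)" by blast
  define \<pi> where "\<pi> = (\<lambda>x. if x \<in> B - J then h x else if x \<in> h ` (B - J) then inv_into (B - J) h x else x)"
  have d: "(B - J) \<inter> (J - B) = {}" by auto
  have pd: "\<And>x. \<pi> x = (if x \<in> B - J then h x else if x \<in> h ` (B - J) then inv_into (B - J) h x else x)"
    unfolding \<pi>_def by (rule refl)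
  note sp = swap_props[OF h(2) h(1) d pd]
  define Kv where "Kv i = (vvec n Y1 Y0 T M1 M0 k c i, i)" for i
  define Ks where "Ks i = (ereal (Y0 i), i)" for i
  have KvJ: "Kv i = (-\<infinity>, i)" if "i \<in> J" for i using that by (simp add: Kv_def vvec_def J_def)
  have KvA: "Kv i = (ereal (Y1 i - c), i)" if "i \<in> A - J" for i
    unfolding Kv_def vvec_def J_def[symmetric] yobs_def using that unfolding A_def by simp
  have KvC: "Kv i = Ks i" if "i \<in> S - A" for i
  proof -
    have "i \<notin> J" "i \<notin> T" using that JA unfolding A_def by auto
    thus ?thesis unfolding Kv_def Ks_def vvec_def J_def[symmetric] yobs_def by simp
  qed
  have BA: "B \<subseteq> A" unfolding B_def by auto
  have key: "Kv (\<pi> i) \<le> Ks i" if i: "i \<in> A" for i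
  proof -
    consider "i \<in> B - J" | "i \<notin> B - J" "i \<in> h ` (B - J)" | "i \<notin> B - J" "i \<notin> h ` (B - J)" by blast
    thus ?thesis
    proof cases
      case 1
      have "\<pi> i \<in> J" using sp(2)[OF 1] h(1) 1 by auto
      thus ?thesis using KvJ unfolding Ks_def by simp
    next
      case 2
      define i' where "i' = \<pi> i"
      have i': "i' \<in> B - J" "h i' = i" using sp(3)[OF 2(2)] unfolding i'_def by auto
      have iJB: "i \<in> J - B" using 2(2) h(1) by auto
      have i'A: "i' \<in> A - J" using i' BA by auto
      have lt: "KY i' < KY i" using ord[OF i'A] iJB by auto
      have yi: "yobs Y1 Y0 T i = Y1 i" "yobs Y1 Y0 T i' = Y1 i'"
        using iJB i'A JA unfolding yobs_def A_def by auto
      have nb: "Y1 i - Y0 i \<le> c" using iJB JA unfolding B_def by auto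
      have "Y1 i' < Y1 i \<or> (Y1 i' \<le> Y1 i \<and> i' < i)" using lt unfolding KY_def yi by auto
      hence "(ereal (Y1 i' - c), i') \<le> (ereal (Y0 i), i)" using nb by auto
      thus ?thesis using KvA[OF i'A] unfolding i'_def Ks_def by simp
    next
      case 3
      have pi: "\<pi> i = i" using sp(4)[OF 3] .
      show ?thesis
      proof (cases "i \<in> J")
        case True thus ?thesis using KvJ pi unfolding Ks_def by simp
      next
        case False
        hence "i \<notin> B" using 3 by auto
        hence "Y1 i - c \<le> Y0 i" using i unfolding B_def by auto
        thus ?thesis using KvA[of i] False i pi unfolding Ks_def by simp
      qed
    qed
  qed
  have piA: "\<pi> ` A \<subseteq> A"
  proof
    fix x assume "x \<in> \<pi> ` A"
    then obtain i where i: "i \<in> A" "x = \<pi> i" by auto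
    consider "i \<in> B - J" | "i \<notin> B - J" "i \<in> h ` (B - J)" | "i \<notin> B - J" "i \<notin> h ` (B - J)" by blast
    thus "x \<in> A"
    proof cases
      case 1 thus ?thesis using sp(2)[OF 1] h(1) JA i by auto
    next
      case 2 thus ?thesis using sp(3)[OF 2(2)] BA i by auto
    next
      case 3 thus ?thesis using sp(4)[OF 3] i by auto
    qed
  qed
  have injpi: "inj_on \<pi> A" using sp(1) by (rule inj_on_subset) simp
  have dom: "card {i\<in>A. Ks i \<le> x} \<le> card {i\<in>A. Kv i \<le> x}" for x
    by (rule dom_of_inj[OF fA injpi piA]) (use key in blast)
  have iKv: "inj_on Kv A" unfolding Kv_def by (auto simp: inj_on_def)
  have iKs: "inj_on Ks A" unfolding Ks_def by (auto simp: inj_on_def)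
  have "gst b \<phi> S A Kv \<le> gst b \<phi> S A Ks"
    by (rule gst_mono[OF fS AS mono iKv iKs _ dom]) (use KvC in auto)
  moreover have "rank_stat b \<phi> S (T \<inter> S) (vvec n Y1 Y0 T M1 M0 k c) = gst b \<phi> S A Kv"
  proof -
    have "S \<inter> (T \<inter> S) = A" unfolding A_def by blast
    thus ?thesis unfolding rank_stat_gst[OF fS] Kv_def by (simp only:)
  qed
  moreover have "rank_stat b \<phi> S (S \<inter> T) (\<lambda>i. ereal (Y0 i)) = gst b \<phi> S A Ks"
  proof -
    have "S \<inter> (S \<inter> T) = A" unfolding A_def by blast
    thus ?thesis unfolding rank_stat_gst[OF fS] Ks_def by (simp only:)
  qed
  ultimately show ?thesis unfolding S_def by simp
qed

lemma pval_mono: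
  assumes mono: "mono \<phi>" and cc: "c \<le> c'"
  shows "pval b \<phi> y0 n Y1 Y0 T M1 M0 k c \<le> pval b \<phi> y0 n Y1 Y0 T M1 M0 k c'"
proof -
  define S where "S = obs n T M1 M0"
  define A where "A = S \<inter> T"
  have fS: "finite S" unfolding S_def by (rule obs_fin)
  have fA: "finite A" unfolding A_def using fS by simp
  have AS: "A \<subseteq> S" unfolding A_def by simp
  define K where "K d i = (vvec n Y1 Y0 T M1 M0 k d i, i)" for d i
  have iK: "inj_on (K d) A" for d unfolding K_def by (auto simp: inj_on_def)
  have le: "K c' i \<le> K c i" for i
    unfolding K_def vvec_def using cc by (auto simp: mult_right_mono)
  have eqC: "\<forall>i\<in>S - A. K c' i = K c i" unfolding K_def vvec_def A_def by auto
  have dom: "card {i\<in>A. K c i \<le> x} \<le> card {i\<in>A. K c' i \<le> x}" for x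
    by (rule dom_of_inj[where \<pi> = id, OF fA]) (use le in auto)
  have e: "S \<inter> (T \<inter> S) = A" unfolding A_def by blast
  have "rank_stat b \<phi> S (T \<inter> S) (vvec n Y1 Y0 T M1 M0 k c') = gst b \<phi> S A (K c')"
    unfolding rank_stat_gst[OF fS] K_def e by (rule refl)
  also have "\<dots> \<le> gst b \<phi> S A (K c)" by (rule gst_mono[OF fS AS mono iK iK eqC dom])
  also have "\<dots> = rank_stat b \<phi> S (T \<inter> S) (vvec n Y1 Y0 T M1 M0 k c)"
    unfolding rank_stat_gst[OF fS] K_def e by (rule refl)
  finally have st: "rank_stat b \<phi> S (T \<inter> S) (vvec n Y1 Y0 T M1 M0 k c') \<le> rank_stat b \<phi> S (T \<inter> S) (vvec n Y1 Y0 T M1 M0 k c)" .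
  show ?thesis unfolding pval_def S_def[symmetric] by (rule G_anti[OF fS st])
qed

lemma upclosed_shape:
  fixes I :: "real set"
  assumes up: "\<And>x y. x \<in> I \<Longrightarrow> x \<le> y \<Longrightarrow> y \<in> I"
  shows "I = {c. Inf (ereal ` I) \<le> ereal c} \<or> I = {c. Inf (ereal ` I) < ereal c}"
proof (cases "Inf (ereal ` I) \<in> ereal ` I")
  case True
  then obtain r where r: "r \<in> I" "Inf (ereal ` I) = ereal r" by auto
  have "I = {c. Inf (ereal ` I) \<le> ereal c}"
  proof
    show "I \<subseteq> {c. Inf (ereal ` I) \<le> ereal c}" by (auto intro: Inf_lower)
    show "{c. Inf (ereal ` I) \<le> ereal c} \<subseteq> I" using r up by auto
  qed
  thus ?thesis by blast
next
  case False
  have "I = {c. Inf (ereal ` I) < ereal c}"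
  proof
    show "I \<subseteq> {c. Inf (ereal ` I) < ereal c}"
    proof
      fix c assume c: "c \<in> I"
      have "Inf (ereal ` I) \<le> ereal c" using c by (auto intro: Inf_lower)
      moreover have "Inf (ereal ` I) \<noteq> ereal c" using False c by auto
      ultimately show "c \<in> {c. Inf (ereal ` I) < ereal c}" by simp
    qed
    show "{c. Inf (ereal ` I) < ereal c} \<subseteq> I"
    proof
      fix c assume "c \<in> {c. Inf (ereal ` I) < ereal c}"
      hence "Inf (ereal ` I) < ereal c" by simp
      then obtain x where x: "x \<in> ereal ` I" "x < ereal c" unfolding Inf_less_iff by blast
      then obtain r where "r \<in> I" "x = ereal r" by auto
      thus "c \<in> I" using x up by auto
    qed
  qed
  thus ?thesis by blast
qed

lemma Hto_tau:
  assumes k1: "1 \<le> k" and kn: "k \<le> nS1 n T M1 M0"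
  shows "Hto n Y1 Y0 T M1 M0 k (tau_to n Y1 Y0 T M1 M0 k)"
proof -
  define A where "A = obs n T M1 M0 \<inter> T"
  have fA: "finite A" unfolding A_def using obs_fin by simp
  define \<tau> where "\<tau> i = Y1 i - Y0 i" for i
  define L where "L = sorted_list_of_set A"
  define xs where "xs = map \<tau> L"
  define ys where "ys = sort xs"
  define t where "t = ys ! (k - 1)"
  define m where "m = card A"
  have lys: "length ys = m" unfolding ys_def xs_def L_def m_def by simp
  have km: "k \<le> m" using kn unfolding nS1_def m_def A_def .
  have tt: "tau_to n Y1 Y0 T M1 M0 k = t"
    unfolding tau_to_def t_def ys_def xs_def L_def A_def \<tau>_def by (rule refl)
  have c1: "card {i\<in>A. t < \<tau> i} = length (filter (\<lambda>x. t < x) xs)"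
  proof -
    have "length (filter (\<lambda>x. t < x) xs) = length (filter (\<lambda>i. t < \<tau> i) L)"
      unfolding xs_def by (simp add: filter_map comp_def)
    also have "\<dots> = card (set (filter (\<lambda>i. t < \<tau> i) L))"
      by (rule distinct_card[symmetric]) (simp add: L_def)
    also have "set (filter (\<lambda>i. t < \<tau> i) L) = {i\<in>A. t < \<tau> i}" unfolding L_def using fA by auto
    finally show ?thesis by simp
  qed
  have c2: "length (filter (\<lambda>x. t < x) xs) = length (filter (\<lambda>x. t < x) ys)"
  proof -
    have "filter (\<lambda>x. t < x) ys = sort (filter (\<lambda>x. t < x) xs)" unfolding ys_def by (rule filter_sort)
    thus ?thesis by simp
  qed
  have c3: "length (filter (\<lambda>x. t < x) ys) \<le> m - k"
  proof -
    have "length (filter (\<lambda>x. t < x) ys) = card {i. i < length ys \<and> t < ys ! i}"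
      by (rule length_filter_conv_card)
    also have "\<dots> \<le> card {k..<m}"
    proof (rule card_mono)
      show "finite {k..<m}" by simp
      show "{i. i < length ys \<and> t < ys ! i} \<subseteq> {k..<m}"
      proof
        fix i assume i: "i \<in> {i. i < length ys \<and> t < ys ! i}"
        have "\<not> i < k"
        proof
          assume "i < k"
          hence "i \<le> k - 1" by simp
          moreover have "k - 1 < length ys" using lys km k1 by simp
          moreover have "sorted ys" unfolding ys_def by simp
          ultimately have "ys ! i \<le> ys ! (k - 1)" by (simp add: sorted_nth_mono)
          thus False using i unfolding t_def by simp
        qed
        thus "i \<in> {k..<m}" using i lys by simp
      qed
    qed
    also have "\<dots> = m - k" by simp
    finally show ?thesis .
  qed
  have "card {i\<in>A. t < \<tau> i} \<le> m - k" using c1 c2 c3 by simp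
  thus ?thesis unfolding Hto_def tt nS1_def using A_def m_def \<tau>_def by simp
qed

lemma HF_lemma:
  assumes fs: "finite s" and a0: "0 \<le> \<alpha>"
  shows "real (card {a. a \<subseteq> s \<and> card a = m \<and>
            G_fun b \<phi> s (card a) Y0 (rank_stat b \<phi> s a (\<lambda>i. ereal (Y0 i))) \<le> \<alpha>})
         \<le> \<alpha> * real (card {a. a \<subseteq> s \<and> card a = m})"
proof -
  define U where "U = {a. a \<subseteq> s \<and> card a = m}"
  define X where "X a = rank_stat b \<phi> s a (\<lambda>i. ereal (Y0 i))" for a
  have fU: "finite U" unfolding U_def by (rule finite_subset[of _ "Pow s"]) (use fs in auto)
  have G: "G_fun b \<phi> s (card u) Y0 (X u) = real (card {v\<in>U. X u \<le> X v}) / real (card U)" if "u \<in> U" for u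
  proof -
    have cu: "card u = m" using that unfolding U_def by simp
    have "{A. A \<subseteq> s \<and> card A = m \<and> X u \<le> rank_stat b \<phi> s A (\<lambda>i. ereal (Y0 i))} = {v\<in>U. X u \<le> X v}"
      unfolding U_def X_def by auto
    thus ?thesis unfolding G_fun_def cu U_def by simp
  qed
  have "{a. a \<subseteq> s \<and> card a = m \<and> G_fun b \<phi> s (card a) Y0 (rank_stat b \<phi> s a (\<lambda>i. ereal (Y0 i))) \<le> \<alpha>}
      = {u\<in>U. real (card {v\<in>U. X u \<le> X v}) / real (card U) \<le> \<alpha>}"
  proof -
    have "{a. a \<subseteq> s \<and> card a = m \<and> G_fun b \<phi> s (card a) Y0 (rank_stat b \<phi> s a (\<lambda>i. ereal (Y0 i))) \<le> \<alpha>}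
        = {u\<in>U. G_fun b \<phi> s (card u) Y0 (X u) \<le> \<alpha>}" unfolding U_def X_def by auto
    also have "\<dots> = {u\<in>U. real (card {v\<in>U. X u \<le> X v}) / real (card U) \<le> \<alpha>}"
      using G by auto
    finally show ?thesis .
  qed
  thus ?thesis using rand_count[OF fU a0, of X] unfolding U_def by simp
qed

lemma det:
  assumes mono: "mono \<phi>" and H: "Hto n Y1 Y0 T M1 M0 k c" and pv: "pval b \<phi> y0 n Y1 Y0 T M1 M0 k c \<le> \<alpha>"
  shows "G_fun b \<phi> (obs n T M1 M0) (card (obs n T M1 M0 \<inter> T)) Y0
           (rank_stat b \<phi> (obs n T M1 M0) (obs n T M1 M0 \<inter> T) (\<lambda>i. ereal (Y0 i))) \<le> \<alpha>"
proof -
  define S where "S = obs n T M1 M0"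
  have fS: "finite S" unfolding S_def by (rule obs_fin)
  have st: "rank_stat b \<phi> S (T \<inter> S) (vvec n Y1 Y0 T M1 M0 k c) \<le> rank_stat b \<phi> S (S \<inter> T) (\<lambda>i. ereal (Y0 i))"
    unfolding S_def by (rule stat_le[OF mono H])
  have "G_fun b \<phi> S (card (S \<inter> T)) Y0 (rank_stat b \<phi> S (S \<inter> T) (\<lambda>i. ereal (Y0 i)))
      \<le> G_fun b \<phi> S (card (S \<inter> T)) Y0 (rank_stat b \<phi> S (T \<inter> S) (vvec n Y1 Y0 T M1 M0 k c))"
    by (rule G_anti[OF fS st])
  also have "\<dots> = G_fun b \<phi> S (card (S \<inter> T)) y0 (rank_stat b \<phi> S (T \<inter> S) (vvec n Y1 Y0 T M1 M0 k c))"
    by (rule G_indep[OF fS])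
  also have "\<dots> = pval b \<phi> y0 n Y1 Y0 T M1 M0 k c" unfolding pval_def nS1_def S_def by (rule refl)
  finally show ?thesis using pv unfolding S_def by simp
qed

theorem theorem10:
  fixes n n1 :: nat and p :: "bool \<Rightarrow> bool \<Rightarrow> real"
    and Y1 Y0 y0 :: "nat \<Rightarrow> real" and \<phi> :: "nat \<Rightarrow> real" and b :: bool
  assumes "1 \<le> n1" and "n1 < n"
    and "\<forall>m m'. 0 \<le> p m m'"
    and "p True True + p True False + p False True + p False False = 1"
    and "mono \<phi>"
  shows "(\<forall>k c \<alpha>. 1 \<le> k \<and> 0 < \<alpha> \<and> \<alpha> < 1 \<longrightarrow>
            prob_ev n n1 p (\<lambda>T M1 M0. k \<le> nS1 n T M1 M0
                \<and> pval b \<phi> y0 n Y1 Y0 T M1 M0 k c \<le> \<alpha>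
                \<and> Hto n Y1 Y0 T M1 M0 k c) \<le> \<alpha>)
       \<and> (\<forall>k \<alpha>. 1 \<le> k \<and> 0 < \<alpha> \<and> \<alpha> < 1 \<longrightarrow>
            prob_ev n n1 p (\<lambda>T M1 M0. k \<le> nS1 n T M1 M0 \<longrightarrow>
                tau_to n Y1 Y0 T M1 M0 k \<in> CI b \<phi> y0 n Y1 Y0 \<alpha> T M1 M0 k) \<ge> 1 - \<alpha>
          \<and> (\<forall>T M1 M0. T \<subseteq> {..<n} \<and> card T = n1 \<and> k \<le> nS1 n T M1 M0 \<longrightarrow>
                (let I = CI b \<phi> y0 n Y1 Y0 \<alpha> T M1 M0 k; t = Inf (ereal ` I) in
                  I = {c. t \<le> ereal c} \<or> I = {c. t < ereal c})))
       \<and> (\<forall>\<alpha>. 0 < \<alpha> \<and> \<alpha> < 1 \<longrightarrow>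
            prob_ev n n1 p (\<lambda>T M1 M0. \<forall>k. 1 \<le> k \<and> k \<le> nS1 n T M1 M0 \<longrightarrow>
                tau_to n Y1 Y0 T M1 M0 k \<in> CI b \<phi> y0 n Y1 Y0 \<alpha> T M1 M0 k) \<ge> 1 - \<alpha>)"
proof -
  note p0 = assms(3) and p1 = assms(4) and mono = assms(5)
  have nn: "n1 \<le> n" using assms(2) by simp
  define Fb where "Fb \<alpha> s a = (G_fun b \<phi> s (card a) Y0 (rank_stat b \<phi> s a (\<lambda>i. ereal (Y0 i))) \<le> \<alpha>)"
    for \<alpha> :: real and s a
  have bad: "prob_ev n n1 p (\<lambda>T M1 M0. Fb \<alpha> (obs n T M1 M0) (obs n T M1 M0 \<inter> T)) \<le> \<alpha>" if a: "0 < \<alpha>" for \<alpha>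
  proof (rule prob_bad[OF p0 p1 nn])
    show "0 \<le> \<alpha>" using a by simp
    fix s m assume "s \<subseteq> {..<n}"
    hence fs: "finite s" by (rule finite_subset) simp
    show "real (card {a. a \<subseteq> s \<and> card a = m \<and> Fb \<alpha> s a}) \<le> \<alpha> * real (card {a. a \<subseteq> s \<and> card a = m})"
      unfolding Fb_def using HF_lemma[OF fs, of \<alpha>] a by simp
  qed
  have detF: "Fb \<alpha> (obs n T M1 M0) (obs n T M1 M0 \<inter> T)"
    if "Hto n Y1 Y0 T M1 M0 k c" "pval b \<phi> y0 n Y1 Y0 T M1 M0 k c \<le> \<alpha>" for \<alpha> T M1 M0 k c
    unfolding Fb_def by (rule det[OF mono that])
  have tot: "prob_ev n n1 p E + prob_ev n n1 p (\<lambda>T M1 M0. \<not> E T M1 M0) = 1" for E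
    using prob_compl[of n n1 p E] prob_total[OF p1 nn] by simp
  have P1: "prob_ev n n1 p (\<lambda>T M1 M0. k \<le> nS1 n T M1 M0
                \<and> pval b \<phi> y0 n Y1 Y0 T M1 M0 k c \<le> \<alpha>
                \<and> Hto n Y1 Y0 T M1 M0 k c) \<le> \<alpha>" if "0 < \<alpha>" for k c \<alpha>
  proof -
    have "prob_ev n n1 p (\<lambda>T M1 M0. k \<le> nS1 n T M1 M0
                \<and> pval b \<phi> y0 n Y1 Y0 T M1 M0 k c \<le> \<alpha>
                \<and> Hto n Y1 Y0 T M1 M0 k c) \<le> prob_ev n n1 p (\<lambda>T M1 M0. Fb \<alpha> (obs n T M1 M0) (obs n T M1 M0 \<inter> T))"
      by (rule prob_mono[OF p0]) (use detF in blast)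
    also have "\<dots> \<le> \<alpha>" by (rule bad[OF that])
    finally show ?thesis .
  qed
  have P2: "prob_ev n n1 p (\<lambda>T M1 M0. k \<le> nS1 n T M1 M0 \<longrightarrow>
                tau_to n Y1 Y0 T M1 M0 k \<in> CI b \<phi> y0 n Y1 Y0 \<alpha> T M1 M0 k) \<ge> 1 - \<alpha>"
    if "1 \<le> k" "0 < \<alpha>" for k \<alpha>
  proof -
    let ?E = "\<lambda>T M1 M0. k \<le> nS1 n T M1 M0 \<longrightarrow>
                tau_to n Y1 Y0 T M1 M0 k \<in> CI b \<phi> y0 n Y1 Y0 \<alpha> T M1 M0 k"
    have "prob_ev n n1 p (\<lambda>T M1 M0. \<not> (k \<le> nS1 n T M1 M0 \<longrightarrow>
                tau_to n Y1 Y0 T M1 M0 k \<in> CI b \<phi> y0 n Y1 Y0 \<alpha> T M1 M0 k))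
        \<le> prob_ev n n1 p (\<lambda>T M1 M0. Fb \<alpha> (obs n T M1 M0) (obs n T M1 M0 \<inter> T))"
    proof (rule prob_mono[OF p0])
      fix T M1 M0
      assume h: "\<not> (k \<le> nS1 n T M1 M0 \<longrightarrow> tau_to n Y1 Y0 T M1 M0 k \<in> CI b \<phi> y0 n Y1 Y0 \<alpha> T M1 M0 k)"
      hence kn: "k \<le> nS1 n T M1 M0" and pv: "pval b \<phi> y0 n Y1 Y0 T M1 M0 k (tau_to n Y1 Y0 T M1 M0 k) \<le> \<alpha>"
        unfolding CI_def by auto
      show "Fb \<alpha> (obs n T M1 M0) (obs n T M1 M0 \<inter> T)"
        by (rule detF[OF Hto_tau[OF that(1) kn] pv])
    qed
    also have "\<dots> \<le> \<alpha>" by (rule bad[OF that(2)])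
    finally have "prob_ev n n1 p (\<lambda>T M1 M0. \<not> ?E T M1 M0) \<le> \<alpha>" .
    moreover have "prob_ev n n1 p ?E + prob_ev n n1 p (\<lambda>T M1 M0. \<not> ?E T M1 M0) = 1" by (rule tot)
    ultimately show ?thesis by linarith
  qed
  have Shape: "let I = CI b \<phi> y0 n Y1 Y0 \<alpha> T M1 M0 k; t = Inf (ereal ` I) in
                  I = {c. t \<le> ereal c} \<or> I = {c. t < ereal c}" for \<alpha> T M1 M0 k
  proof -
    have "\<And>x y. x \<in> CI b \<phi> y0 n Y1 Y0 \<alpha> T M1 M0 k \<Longrightarrow> x \<le> y \<Longrightarrow> y \<in> CI b \<phi> y0 n Y1 Y0 \<alpha> T M1 M0 k"
    proof -
      fix x y assume x: "x \<in> CI b \<phi> y0 n Y1 Y0 \<alpha> T M1 M0 k" and xy: "x \<le> y"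
      have "\<alpha> < pval b \<phi> y0 n Y1 Y0 T M1 M0 k x" using x unfolding CI_def by simp
      also have "\<dots> \<le> pval b \<phi> y0 n Y1 Y0 T M1 M0 k y" by (rule pval_mono[OF mono xy])
      finally show "y \<in> CI b \<phi> y0 n Y1 Y0 \<alpha> T M1 M0 k" unfolding CI_def by simp
    qed
    thus ?thesis unfolding Let_def by (rule upclosed_shape)
  qed
  have P3: "prob_ev n n1 p (\<lambda>T M1 M0. \<forall>k. 1 \<le> k \<and> k \<le> nS1 n T M1 M0 \<longrightarrow>
                tau_to n Y1 Y0 T M1 M0 k \<in> CI b \<phi> y0 n Y1 Y0 \<alpha> T M1 M0 k) \<ge> 1 - \<alpha>"
    if "0 < \<alpha>" for \<alpha>
  proof -
    let ?E = "\<lambda>T M1 M0. \<forall>k. 1 \<le> k \<and> k \<le> nS1 n T M1 M0 \<longrightarrow>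
                tau_to n Y1 Y0 T M1 M0 k \<in> CI b \<phi> y0 n Y1 Y0 \<alpha> T M1 M0 k"
    have "prob_ev n n1 p (\<lambda>T M1 M0. \<not> (\<forall>k. 1 \<le> k \<and> k \<le> nS1 n T M1 M0 \<longrightarrow>
                tau_to n Y1 Y0 T M1 M0 k \<in> CI b \<phi> y0 n Y1 Y0 \<alpha> T M1 M0 k))
        \<le> prob_ev n n1 p (\<lambda>T M1 M0. Fb \<alpha> (obs n T M1 M0) (obs n T M1 M0 \<inter> T))"
    proof (rule prob_mono[OF p0])
      fix T M1 M0
      assume "\<not> (\<forall>k. 1 \<le> k \<and> k \<le> nS1 n T M1 M0 \<longrightarrow>
                tau_to n Y1 Y0 T M1 M0 k \<in> CI b \<phi> y0 n Y1 Y0 \<alpha> T M1 M0 k)"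
      then obtain k where k1: "1 \<le> k" and kn: "k \<le> nS1 n T M1 M0"
        and pv: "pval b \<phi> y0 n Y1 Y0 T M1 M0 k (tau_to n Y1 Y0 T M1 M0 k) \<le> \<alpha>"
        unfolding CI_def by auto
      show "Fb \<alpha> (obs n T M1 M0) (obs n T M1 M0 \<inter> T)"
        by (rule detF[OF Hto_tau[OF k1 kn] pv])
    qed
    also have "\<dots> \<le> \<alpha>" by (rule bad[OF that])
    finally have "prob_ev n n1 p (\<lambda>T M1 M0. \<not> ?E T M1 M0) \<le> \<alpha>" .
    moreover have "prob_ev n n1 p ?E + prob_ev n n1 p (\<lambda>T M1 M0. \<not> ?E T M1 M0) = 1" by (rule tot)
    ultimately show ?thesis by linarith
  qed
  show ?thesis
    apply (intro conjI allI impI)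
    subgoal using P1 by blast
    subgoal using P2 by blast
    subgoal using Shape by blast
    subgoal using P3 by blast
    done
qed

end
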